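(* Let $q$ be a power of $2$, let $V$ be a $2m$-dimensional vector space over $\mathbb{F}_q$, let $Q$ be a non-degenerate quadratic form on $V$ with associated (alternating) bilinear form $\beta_Q$, so that $\mathcal{C}(Q)\cong\mathrm{O}^\epsilon_{2m}(q)$ for some sign $\epsilon$. Let $X\in\mathcal{C}(Q)$ be semisimple with minimal polynomial $f\in\Phi$. (i) If $f\in\Phi_1$, then $X=I$ and $C_{\mathcal{C}(Q)}(X)=\mathcal{C}(Q)$. (ii) If $f\in\Phi_2\cup\Phi_3$, then $X^{{\rm GL}(V)}\cap\mathcal{C}(Q)=X^{\mathcal{C}(Q)}$ (a single $\mathcal{C}(Q)$-class), and $C_{\mathcal{C}(Q)}(X)=C_{\mathcal{C}(\beta_Q)}(X)$; in particular $C_{\mathrm{O}^\epsilon_{2m}(q)}(X)=C_{{\rm Sp}_{2m}(q)}(X)$.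
   Context: $\beta_Q(v,w)=Q(v+w)-Q(v)-Q(w)$; $Q$ non-degenerate means $\beta_Q$ non-degenerate. $\mathcal{C}(Q)=\{g\in{\rm GL}(V):Q(vg)=Q(v)\}$, $\mathcal{C}(\beta_Q)$ the isometry group of $\beta_Q$ (a symplectic group). Semisimple means odd order. For monic $f=t^d+\cdots+a_0$ with $a_0\ne0$, $f^*(t)=a_0^{-1}t^df(t^{-1})$. $\Phi_1=\{t+1\}$ (monic irreducible self-dual of degree 1); $\Phi_2$: $gg^*$ with $g$ monic irreducible, $g\ne g^*$; $\Phi_3$: monic irreducible $f=f^*$ with $\deg f>1$; $\Phi=\Phi_1\cup\Phi_2\cup\Phi_3$. $X^H$ is the conjugacy class of $X$ in $H$. *)

theory Defs
  imports "HOL-Analysis.Analysis" "HOL-Computational_Algebra.Polynomial_Factorial"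
begin

text \<open>Vectors of V = F^n are row vectors 'a^'n; g acts on the right: v g = v v* g.\<close>

definition mat_pow :: "'a::comm_ring_1^'n^'n \<Rightarrow> nat \<Rightarrow> 'a^'n^'n" where
  "mat_pow A k = ((\<lambda>B. B ** A) ^^ k) (mat 1)"

definition poly_mat :: "'a::comm_ring_1 poly \<Rightarrow> 'a^'n^'n \<Rightarrow> 'a^'n^'n" where
  "poly_mat f A = (\<Sum>i\<le>degree f. mat (coeff f i) ** mat_pow A i)"

definition is_min_poly :: "'a::field^'n^'n \<Rightarrow> 'a poly \<Rightarrow> bool" where
  "is_min_poly A f \<longleftrightarrow> lead_coeff f = 1 \<and> poly_mat f A = 0 \<and>
     (\<forall>g. g \<noteq> 0 \<and> poly_mat g A = 0 \<longrightarrow> degree f \<le> degree g)"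

definition mat_order :: "'a::comm_ring_1^'n^'n \<Rightarrow> nat" where
  "mat_order A = (LEAST k. 0 < k \<and> mat_pow A k = mat 1)"

definition semisimple :: "'a::comm_ring_1^'n^'n \<Rightarrow> bool" where
  "semisimple A \<longleftrightarrow> odd (mat_order A)"

definition polar :: "('a::field^'n \<Rightarrow> 'a) \<Rightarrow> 'a^'n \<Rightarrow> 'a^'n \<Rightarrow> 'a" where
  "polar Q v w = Q (v + w) - Q v - Q w"

definition bilinear_form :: "('a::field^'n \<Rightarrow> 'a^'n \<Rightarrow> 'a) \<Rightarrow> bool" where
  "bilinear_form B \<longleftrightarrow>
     (\<forall>u v w. B (u + v) w = B u w + B v w) \<and> (\<forall>u v w. B u (v + w) = B u v + B u w) \<and>
     (\<forall>c v w. B (c *s v) w = c * B v w) \<and> (\<forall>c v w. B v (c *s w) = c * B v w)"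

definition quadratic_form :: "('a::field^'n \<Rightarrow> 'a) \<Rightarrow> bool" where
  "quadratic_form Q \<longleftrightarrow> (\<forall>c v. Q (c *s v) = c^2 * Q v) \<and> bilinear_form (polar Q)"

definition nondegenerate :: "('a::field^'n \<Rightarrow> 'a^'n \<Rightarrow> 'a) \<Rightarrow> bool" where
  "nondegenerate B \<longleftrightarrow> (\<forall>v. (\<forall>w. B v w = 0) \<longrightarrow> v = 0)"

definition GLV :: "('a::field^'n^'n) set" where
  "GLV = {g. invertible g}"

definition isom_Q :: "('a::field^'n \<Rightarrow> 'a) \<Rightarrow> ('a^'n^'n) set" where
  "isom_Q Q = {g. invertible g \<and> (\<forall>v. Q (v v* g) = Q v)}"

definition isom_B :: "('a::field^'n \<Rightarrow> 'a^'n \<Rightarrow> 'a) \<Rightarrow> ('a^'n^'n) set" where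
  "isom_B B = {g. invertible g \<and> (\<forall>v w. B (v v* g) (w v* g) = B v w)}"

definition centralizer :: "('a::field^'n^'n) set \<Rightarrow> 'a^'n^'n \<Rightarrow> ('a^'n^'n) set" where
  "centralizer H X = {g \<in> H. g ** X = X ** g}"

definition conj_class :: "('a::field^'n^'n) set \<Rightarrow> 'a^'n^'n \<Rightarrow> ('a^'n^'n) set" where
  "conj_class H X = {matrix_inv g ** X ** g | g. g \<in> H}"

definition dual_poly :: "'a::field poly \<Rightarrow> 'a poly" where
  "dual_poly f = smult (inverse (coeff f 0)) (reflect_poly f)"

definition Phi1 :: "'a::field poly set" where
  "Phi1 = {[:1, 1:]}"

definition Phi2 :: "'a::field poly set" where
  "Phi2 = {g * dual_poly g | g. lead_coeff g = 1 \<and> irreducible g \<and> coeff g 0 \<noteq> 0 \<and> g \<noteq> dual_poly g}"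

definition Phi3 :: "'a::field poly set" where
  "Phi3 = {f. lead_coeff f = 1 \<and> irreducible f \<and> coeff f 0 \<noteq> 0 \<and> f = dual_poly f \<and> degree f > 1}"

definition Phi :: "'a::field poly set" where
  "Phi = Phi1 \<union> Phi2 \<union> Phi3"

end

theory Submission
  imports Defs
begin


lemma card_one_zero:
  "of_nat CARD('a::{finite,field}) = (0::'a)"
proof -
  have "(\<Sum>x\<in>(UNIV::'a set). x + 1) = (\<Sum>x\<in>UNIV. x)"
    by (rule sum.reindex_bij_witness[where i="\<lambda>x. x - 1" and j="\<lambda>x. x + 1"]) auto
  then show ?thesis by (simp add: sum.distrib)
qed

lemma char2_of_card:
  assumes "\<exists>k. CARD('a::{finite,field}) = 2 ^ k"
  shows "(2::'a) = 0"
proof -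
  obtain k where k: "CARD('a) = 2 ^ k" using assms by blast
  have "(2::'a) ^ k = 0" using card_one_zero[where 'a='a] k by simp
  then show ?thesis by simp
qed

lemma mat_pow_0[simp]: "mat_pow A 0 = mat 1"
  by (simp add: mat_pow_def)
lemma mat_pow_Suc: "mat_pow A (Suc k) = mat_pow A k ** A"
  by (simp add: mat_pow_def)

lemma mat_pow_comm: "mat_pow A k ** A = A ** mat_pow A k"
  by (induction k) (simp_all add: mat_pow_Suc matrix_mul_assoc[symmetric])

lemma mat_pow_add: "mat_pow A (i + j) = mat_pow A i ** mat_pow A j"
  by (induction j) (simp_all add: mat_pow_Suc matrix_mul_assoc)

lemma mat_add: "mat (a + b) = (mat a + mat b :: 'a::comm_ring_1^'n^'n)"
  by (simp add: vec_eq_iff mat_def)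

lemma ite_mult_left: "(if P then a else 0) * (b::'a::comm_ring_1) = (if P then a * b else 0)" by simp
lemma ite_mult_right: "(b::'a::comm_ring_1) * (if P then a else 0) = (if P then a * b else 0)" by simp

lemma mat_mul_left_nth: "(mat a ** B) $ i $ j = a * (B::'a::comm_ring_1^'n^'n) $ i $ j"
  unfolding matrix_matrix_mult_def mat_def by (simp only: vec_lambda_beta ite_mult_left sum.delta) simp

lemma mat_mul_right_nth: "(B ** mat a) $ i $ j = a * (B::'a::comm_ring_1^'n^'n) $ i $ j"
  unfolding matrix_matrix_mult_def mat_def by (simp only: vec_lambda_beta ite_mult_right sum.delta') simp

lemma mat_mult: "mat (a * b) = (mat a ** mat b :: 'a::comm_ring_1^'n^'n)"
  by (simp add: vec_eq_iff mat_mul_left_nth) (simp add: mat_def)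

lemma mat_comm: "mat a ** (B::'a::comm_ring_1^'n^'n) = B ** mat a"
proof -
  have "\<forall>i j. (mat a ** B)$i$j = (B ** mat a)$i$j" by (simp add: mat_mul_left_nth mat_mul_right_nth)
  then show ?thesis by (simp add: vec_eq_iff)
qed

lemma matrix_add_rdistrib: "(B + C) ** (A::'a::comm_ring_1^'n^'m) = B ** A + C ** A"
  by (vector matrix_matrix_mult_def sum.distrib[symmetric] field_simps)

lemma matrix_mul_sum_right:
  "(\<Sum>i\<in>S. F i) ** (B::'a::comm_ring_1^'n^'n) = (\<Sum>i\<in>S. F i ** B)"
  by (induction S rule: infinite_finite_induct) (simp_all add: matrix_add_rdistrib)

lemma matrix_mul_sum_left:
  "(B::'a::comm_ring_1^'n^'n) ** (\<Sum>i\<in>S. F i) = (\<Sum>i\<in>S. B ** F i)"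
  by (induction S rule: infinite_finite_induct) (simp_all add: matrix_add_ldistrib)

lemma poly_mat_bound:
  assumes "degree p \<le> N"
  shows "poly_mat p A = (\<Sum>i\<le>N. mat (coeff p i) ** mat_pow A i)"
proof -
  have "(\<Sum>i\<le>N. mat (coeff p i) ** mat_pow A i) = (\<Sum>i\<le>degree p. mat (coeff p i) ** mat_pow A i)"
    by (rule sum.mono_neutral_right) (use assms in \<open>auto simp: coeff_eq_0\<close>)
  then show ?thesis by (simp add: poly_mat_def)
qed

lemma poly_mat_pCons:
  "poly_mat (pCons a p) A = mat a + poly_mat p A ** A"
proof -
  have d: "degree (pCons a p) \<le> Suc (degree p)" by simp
  have "poly_mat (pCons a p) A = (\<Sum>i\<le>Suc (degree p). mat (coeff (pCons a p) i) ** mat_pow A i)"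
    by (rule poly_mat_bound[OF d])
  also have "\<dots> = mat a + (\<Sum>i\<le>degree p. mat (coeff p i) ** (mat_pow A i ** A))"
    unfolding sum.atMost_Suc_shift by (simp add: mat_pow_Suc)
  also have "\<dots> = mat a + poly_mat p A ** A"
    by (simp add: poly_mat_def matrix_mul_sum_right matrix_mul_assoc)
  finally show ?thesis .
qed

lemma poly_mat_0[simp]: "poly_mat 0 A = 0"
  by (simp add: poly_mat_def)

lemma poly_mat_const[simp]: "poly_mat [:a:] A = mat a"
  using poly_mat_pCons[of a 0 A] by simp

lemma poly_mat_1[simp]: "poly_mat 1 A = mat 1"
  by (simp add: one_pCons)

lemma poly_mat_X: "poly_mat [:0,1:] A = A"
  using poly_mat_pCons[of 0 "[:1:]" A] by simp

lemma poly_mat_comm: "poly_mat p A ** A = A ** poly_mat p A"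
  by (induction p) (simp_all add: poly_mat_pCons matrix_add_rdistrib matrix_add_ldistrib
      mat_comm, metis matrix_mul_assoc)

lemma poly_mat_add: "poly_mat (p + q) A = poly_mat p A + poly_mat q A"
proof -
  let ?N = "max (degree p) (degree q)"
  have "poly_mat (p + q) A = (\<Sum>i\<le>?N. mat (coeff (p+q) i) ** mat_pow A i)"
    by (rule poly_mat_bound) (simp add: degree_add_le)
  also have "\<dots> = (\<Sum>i\<le>?N. mat (coeff p i) ** mat_pow A i) + (\<Sum>i\<le>?N. mat (coeff q i) ** mat_pow A i)"
    by (simp add: mat_add matrix_add_rdistrib sum.distrib)
  also have "\<dots> = poly_mat p A + poly_mat q A"
    by (simp add: poly_mat_bound[symmetric])
  finally show ?thesis .
qed

lemma poly_mat_smult: "poly_mat (smult a p) A = mat a ** poly_mat p A"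
proof -
  have "poly_mat (smult a p) A = (\<Sum>i\<le>degree p. mat (coeff (smult a p) i) ** mat_pow A i)"
    by (rule poly_mat_bound) (simp add: degree_smult_le)
  also have "\<dots> = mat a ** poly_mat p A"
    by (simp add: poly_mat_def matrix_mul_sum_left mat_mult matrix_mul_assoc)
  finally show ?thesis .
qed

lemma poly_mat_mult: "poly_mat (p * q) A = poly_mat p A ** poly_mat q A"
proof (induction p)
  case 0
  then show ?case by simp
next
  case (pCons a p)
  have "pCons a p * q = smult a q + pCons 0 (p * q)" by simp
  then have "poly_mat (pCons a p * q) A = mat a ** poly_mat q A + poly_mat (p * q) A ** A"
    by (simp only: poly_mat_add poly_mat_smult poly_mat_pCons) simp
  also have "\<dots> = mat a ** poly_mat q A + poly_mat p A ** (A ** poly_mat q A)"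
  proof -
    have "poly_mat (p * q) A ** A = poly_mat p A ** (poly_mat q A ** A)"
      by (simp add: pCons.IH matrix_mul_assoc)
    also have "\<dots> = poly_mat p A ** (A ** poly_mat q A)" by (simp add: poly_mat_comm)
    finally show ?thesis by simp
  qed
  also have "\<dots> = poly_mat (pCons a p) A ** poly_mat q A"
    by (simp add: poly_mat_pCons matrix_add_rdistrib matrix_mul_assoc)
  finally show ?case .
qed

lemma poly_mat_commute: "poly_mat p A ** poly_mat q A = poly_mat q A ** poly_mat p A"
  by (metis poly_mat_mult mult.commute)

lemma poly_mat_minus: "poly_mat (- p) A = - poly_mat p A"
  using poly_mat_add[of p "-p" A] by (simp add: eq_neg_iff_add_eq_0 add.commute)

lemma poly_mat_diff: "poly_mat (p - q) A = poly_mat p A - poly_mat q A"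
  using poly_mat_add[of p "-q" A] by (simp add: poly_mat_minus)

lemma poly_mat_mat_pow: "poly_mat (monom 1 k) A = mat_pow A k"
  by (induction k) (simp_all add: monom_Suc poly_mat_pCons mat_pow_Suc)



lemma bezout_irr:
  fixes f p :: "'a::field poly"
  assumes irr: "irreducible f" and nd: "\<not> f dvd p"
  shows "\<exists>u v. u * p + v * f = 1"
proof -
  define S where "S = {g. g \<noteq> 0 \<and> (\<exists>u v. g = u * p + v * f)}"
  have p0: "p \<noteq> 0" using nd by auto
  have "p = 1 * p + 0 * f" by simp
  then have pS: "p \<in> S" unfolding S_def using p0 by blast
  obtain g where gS: "g \<in> S" and gmin: "\<And>h. h \<in> S \<Longrightarrow> degree g \<le> degree h"
    using ex_has_least_nat[of "\<lambda>g. g \<in> S" p degree] pS by blast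
  obtain u v where guv: "g = u * p + v * f" and g0: "g \<noteq> 0" using gS unfolding S_def by blast
  have gdvd: "g dvd q" if "q = a * p + b * f" for q a b
  proof (rule ccontr)
    assume "\<not> g dvd q"
    then have m0: "q mod g \<noteq> 0" by (simp add: mod_eq_0_iff_dvd)
    have "q mod g = q - q div g * g" by (simp add: minus_div_mult_eq_mod)
    also have "\<dots> = (a - (q div g) * u) * p + (b - (q div g) * v) * f"
      using that guv by (simp add: algebra_simps)
    finally have "q mod g \<in> S" using m0 unfolding S_def by blast
    then have "degree g \<le> degree (q mod g)" by (rule gmin)
    moreover have "degree (q mod g) < degree g" using degree_mod_less[OF g0, of q] m0 by simp
    ultimately show False by simp
  qed
  have "g dvd f" by (rule gdvd[of f 0 1]) simp
  then obtain k where fk: "f = g * k" by (elim dvdE)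
  have "g dvd p" by (rule gdvd[of p 1 0]) simp
  have "is_unit g \<or> is_unit k" using irr fk by (simp add: irreducible_def)
  moreover have "\<not> is_unit k"
  proof
    assume "is_unit k"
    then have "f dvd g" using fk by (metis dvd_mult_unit_iff dvd_refl)
    with \<open>g dvd p\<close> nd show False using dvd_trans by blast
  qed
  ultimately have "is_unit g" by blast
  then obtain w where "1 = g * w" by (elim dvdE)
  then have "(w * u) * p + (w * v) * f = 1" using guv by (simp add: algebra_simps)
  then show ?thesis by blast
qed



lemma vm_assoc: "v v* (A ** B) = (v v* A) v* B"
  by (simp add: vector_matrix_mul_assoc)

lemma axis_vm: "(axis i 1 v* A) $ j = (A::'a::comm_ring_1^'m^'n) $ i $ j"
  unfolding vector_matrix_mult_def axis_def by (simp only: vec_lambda_beta ite_mult_left sum.delta) simp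

lemma mat_eq_rows: "(\<And>v. v v* A = v v* B) \<Longrightarrow> A = (B::'a::comm_ring_1^'m^'n)"
  by (metis axis_vm vec_eq_iff)

lemma vm_mat: "v v* mat c = c *s (v::'a::comm_ring_1^'n)"
  by (simp add: vec_eq_iff vector_matrix_mult_def mat_def ite_mult_right sum.delta' mult.commute
      cong: if_cong)

lemma vm_add_right: "v v* (A + B) = v v* A + v v* (B::'a::comm_ring_1^'m^'n)"
  by (simp add: vec_eq_iff vector_matrix_mult_def algebra_simps sum.distrib)

lemma vm_neg_right: "v v* (- A) = - (v v* (A::'a::comm_ring_1^'m^'n))"
  by (simp add: vec_eq_iff vector_matrix_mult_def sum_negf)

lemma vm_neg_left: "(- v) v* A = - (v v* (A::'a::comm_ring_1^'m^'n))"
  by (simp add: vec_eq_iff vector_matrix_mult_def sum_negf)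

lemma vm_diff_right: "v v* (A - B) = v v* A - v v* (B::'a::comm_ring_1^'m^'n)"
  by (simp add: vec_eq_iff vector_matrix_mult_def algebra_simps sum_subtractf)

lemma vm_diff_left: "(v - w) v* A = v v* A - w v* (A::'a::comm_ring_1^'m^'n)"
  by (simp add: vec_eq_iff vector_matrix_mult_def algebra_simps sum_subtractf)

lemma vm_scale_left: "(c *s v) v* A = c *s (v v* (A::'a::field^'m^'n))"
  by (rule scalar_vector_matrix_assoc)

lemma vm_matmul_mat: "v v* (mat c ** A) = c *s (v v* (A::'a::field^'m^'n))"
  by (simp add: vm_assoc vm_mat vm_scale_left)

section \<open>Bilinear forms\<close>

context
  fixes C :: "'a::field^'n \<Rightarrow> 'a^'n \<Rightarrow> 'a"
  assumes bil: "bilinear_form C"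
begin

lemma bf_addL: "C (u + v) w = C u w + C v w" using bil by (simp add: bilinear_form_def)
lemma bf_addR: "C u (v + w) = C u v + C u w" using bil by (simp add: bilinear_form_def)
lemma bf_scaleL: "C (c *s v) w = c * C v w" using bil by (simp add: bilinear_form_def)
lemma bf_scaleR: "C v (c *s w) = c * C v w" using bil by (simp add: bilinear_form_def)
lemma bf_zeroL[simp]: "C 0 w = 0" using bf_scaleL[of 0 0 w] by simp
lemma bf_zeroR[simp]: "C v 0 = 0" using bf_scaleR[of v 0 0] by simp
lemma bf_negL: "C (- v) w = - C v w" using bf_scaleL[of "-1" v w] by simp
lemma bf_negR: "C v (- w) = - C v w" using bf_scaleR[of v "-1" w] by simp
lemma bf_diffL: "C (u - v) w = C u w - C v w"
  using bf_addL[of u "-v" w] bf_negL[of v w] by simp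
lemma bf_diffR: "C u (v - w) = C u v - C u w"
  using bf_addR[of u v "-w"] bf_negR[of u w] by simp
lemma bf_sumL: "C (\<Sum>i\<in>S. g i) w = (\<Sum>i\<in>S. C (g i) w)"
  by (induction S rule: infinite_finite_induct) (simp_all add: bf_addL)
lemma bf_sumR: "C w (\<Sum>i\<in>S. g i) = (\<Sum>i\<in>S. C w (g i))"
  by (induction S rule: infinite_finite_induct) (simp_all add: bf_addR)

end




lemma matrix_neg_right: "A ** (- B) = - (A ** (B::'a::comm_ring_1^'n^'m))"
  by (simp add: vec_eq_iff matrix_matrix_mult_def sum_negf)
lemma matrix_neg_left: "(- A) ** B = - (A ** (B::'a::comm_ring_1^'n^'m))"
  by (simp add: vec_eq_iff matrix_matrix_mult_def sum_negf)
lemma matrix_sub_ldistrib: "A ** (B - C) = A ** B - A ** (C::'a::comm_ring_1^'n^'m)"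
  using matrix_add_ldistrib[of A B "- C"] by (simp add: matrix_neg_right)
lemma matrix_sub_rdistrib: "(B - C) ** A = B ** A - C ** (A::'a::comm_ring_1^'n^'m)"
  using matrix_add_rdistrib[of B "- C" A] by (simp add: matrix_neg_left)

lemma mat_neg: "mat (- a) = - (mat a :: 'a::comm_ring_1^'n^'n)"
  by (simp add: vec_eq_iff mat_def)

lemma matrix_inv_both:
  assumes "invertible (A::'a::comm_ring_1^'n^'n)"
  shows "A ** matrix_inv A = mat 1" "matrix_inv A ** A = mat 1"
  using someI_ex[OF assms[unfolded invertible_def]] unfolding matrix_inv_def by auto

lemma left_inv_invertible:
  assumes "B ** A = mat 1" shows "invertible (A::'a::field^'n^'n)" "matrix_inv A = B"
proof -
  show inv: "invertible A" using assms invertible_left_inverse by blast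
  have "matrix_inv A = matrix_inv A ** (A ** B)"
    using assms matrix_left_right_inverse by (metis matrix_mul_rid)
  also have "\<dots> = B" using matrix_inv_both(2)[OF inv] by (simp add: matrix_mul_assoc)
  finally show "matrix_inv A = B" .
qed

locale mpf =
  fixes X :: "'a::{finite,field}^'n::finite^'n" and f :: "'a poly"
  assumes minp: "is_min_poly X f" and irr: "irreducible f" and c0: "coeff f 0 \<noteq> 0"
begin

definition K where "K = range (\<lambda>p. poly_mat p X)"

lemma lc: "lead_coeff f = 1" using minp by (simp add: is_min_poly_def)
lemma f0: "f \<noteq> 0" using lc by auto
lemma fX: "poly_mat f X = 0" using minp by (simp add: is_min_poly_def)
lemma fmin: "g \<noteq> 0 \<Longrightarrow> poly_mat g X = 0 \<Longrightarrow> degree f \<le> degree g"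
  using minp by (simp add: is_min_poly_def)

lemma Dpos: "degree f > 0"
proof (rule ccontr)
  assume "\<not> degree f > 0"
  then have "is_unit f" using f0 is_unit_iff_degree by auto
  then show False using irr by (simp add: irreducible_def)
qed

lemma mult_f_zero: "poly_mat (q * f) X = 0"
  by (simp add: poly_mat_mult fX)

lemma poly_mat_mod: "poly_mat (p mod f) X = poly_mat p X"
proof -
  have "p mod f = p - (p div f) * f" by (simp add: minus_div_mult_eq_mod)
  then show ?thesis by (simp add: poly_mat_diff mult_f_zero)
qed

lemma min_dvd: assumes "poly_mat g X = 0" shows "f dvd g"
proof (rule ccontr)
  assume "\<not> f dvd g"
  then have m0: "g mod f \<noteq> 0" by (simp add: mod_eq_0_iff_dvd)
  have "poly_mat (g mod f) X = 0" using assms by (simp add: poly_mat_mod)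
  then have "degree f \<le> degree (g mod f)" using fmin m0 by blast
  moreover have "degree (g mod f) < degree f" using degree_mod_less[OF f0, of g] m0 by simp
  ultimately show False by simp
qed

lemma poly_mat_zero_iff: "poly_mat g X = 0 \<longleftrightarrow> f dvd g"
  using min_dvd by (auto elim!: dvdE simp: poly_mat_mult fX)

lemma K_poly[intro, simp]: "poly_mat p X \<in> K" by (simp add: K_def)
lemma K_E: assumes "A \<in> K" obtains p where "A = poly_mat p X" using assms by (auto simp: K_def)

lemma K_0[simp]: "0 \<in> K" using K_poly[of 0] by simp
lemma K_1[simp]: "mat 1 \<in> K" using K_poly[of 1] by simp
lemma K_mat[simp]: "mat c \<in> K" using K_poly[of "[:c:]"] by simp
lemma K_X[simp]: "X \<in> K" using K_poly[of "[:0,1:]"] by (simp add: poly_mat_X)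
lemma K_add[simp]: "A \<in> K \<Longrightarrow> B \<in> K \<Longrightarrow> A + B \<in> K"
  by (metis K_E K_poly poly_mat_add)
lemma K_mult[simp]: "A \<in> K \<Longrightarrow> B \<in> K \<Longrightarrow> A ** B \<in> K"
  by (metis K_E K_poly poly_mat_mult)
lemma K_neg[simp]: "A \<in> K \<Longrightarrow> - A \<in> K"
  by (metis K_E K_poly poly_mat_minus)
lemma K_diff[simp]: "A \<in> K \<Longrightarrow> B \<in> K \<Longrightarrow> A - B \<in> K"
  by (metis K_E K_poly poly_mat_diff)
lemma K_comm: "A \<in> K \<Longrightarrow> B \<in> K \<Longrightarrow> A ** B = B ** A"
  by (metis K_E poly_mat_commute)
lemma K_pow[simp]: "mat_pow X i \<in> K"
  by (metis K_poly poly_mat_mat_pow)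
lemma K_sum[simp]: "(\<And>i. i \<in> S \<Longrightarrow> F i \<in> K) \<Longrightarrow> sum F S \<in> K"
  by (induction S rule: infinite_finite_induct) auto

lemma K_domain:
  assumes "A \<in> K" "B \<in> K" "A ** B = 0" shows "A = 0 \<or> B = 0"
proof -
  obtain p q where "A = poly_mat p X" "B = poly_mat q X" using assms by (auto elim!: K_E)
  then have "f dvd p * q" using assms by (simp add: poly_mat_zero_iff[symmetric] poly_mat_mult)
  then have "f dvd p \<or> f dvd q" using field_poly_irreducible_imp_prime[OF irr]
    by (simp add: prime_elem_dvd_mult_iff)
  then show ?thesis using \<open>A = _\<close> \<open>B = _\<close> by (auto simp: poly_mat_zero_iff)
qed

lemma K_inv:
  assumes "A \<in> K" "A \<noteq> 0" shows "\<exists>B\<in>K. B ** A = mat 1"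
proof -
  obtain p where p: "A = poly_mat p X" using assms by (auto elim!: K_E)
  then have "\<not> f dvd p" using assms by (simp add: poly_mat_zero_iff[symmetric])
  then obtain u v where "u * p + v * f = 1" using bezout_irr[OF irr] by blast
  then have "poly_mat (u * p + v * f) X = mat 1" by simp
  then have "poly_mat u X ** A = mat 1" using p by (simp add: poly_mat_add poly_mat_mult fX)
  then show ?thesis by blast
qed

lemma K_cancel:
  assumes "A \<in> K" "B \<in> K" "C \<in> K" "A \<noteq> 0" "A ** B = A ** C" shows "B = C"
proof -
  have "A ** (B - C) = 0" using assms by (simp add: matrix_sub_ldistrib)
  then show ?thesis using K_domain[of A "B - C"] assms by auto
qed

lemma X_left_inv: "\<exists>Y\<in>K. Y ** X = mat 1"
proof -
  obtain q where fq: "f = pCons (coeff f 0) q"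
    by (metis coeff_pCons_0 pCons_cases)
  have "mat (coeff f 0) + poly_mat q X ** X = 0" using fX fq poly_mat_pCons by metis
  then have "poly_mat q X ** X = - mat (coeff f 0)" by (simp add: eq_neg_iff_add_eq_0 add.commute)
  then have "(mat (- inverse (coeff f 0)) ** poly_mat q X) ** X = mat (- inverse (coeff f 0)) ** (- mat (coeff f 0))"
    by (simp add: matrix_mul_assoc[symmetric])
  also have "\<dots> = mat 1" using c0 by (simp add: matrix_neg_right mat_mult[symmetric] mat_neg[symmetric])
  finally show ?thesis by (intro bexI[of _ "mat (- inverse (coeff f 0)) ** poly_mat q X"]) auto
qed

definition Xi where "Xi = matrix_inv X"

lemma Xi_facts: "Xi \<in> K" "Xi ** X = mat 1" "X ** Xi = mat 1" "invertible X"
proof -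
  obtain Y where Y: "Y \<in> K" "Y ** X = mat 1" using X_left_inv by blast
  then show "invertible X" "Xi \<in> K" "Xi ** X = mat 1" "X ** Xi = mat 1"
    using left_inv_invertible[OF Y(2)] K_comm[of Y X] unfolding Xi_def by auto
qed


lemma K_red: assumes "A \<in> K" shows "\<exists>p. degree p < degree f \<and> A = poly_mat p X"
proof -
  obtain p where p: "A = poly_mat p X" using assms by (auto elim!: K_E)
  have "degree (p mod f) < degree f"
    using degree_mod_less[OF f0, of p] Dpos by auto
  then show ?thesis using p poly_mat_mod by metis
qed

lemma low_inj:
  assumes "degree p < degree f" "degree q < degree f" "poly_mat p X = poly_mat q X"
  shows "p = q"
proof (rule ccontr)
  assume "p \<noteq> q"
  then have ne: "p - q \<noteq> 0" by simp
  have "poly_mat (p - q) X = 0" using assms(3) by (simp add: poly_mat_diff)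
  then have "f dvd (p - q)" by (rule min_dvd)
  then have "degree f \<le> degree (p - q)" using ne by (rule dvd_imp_degree_le)
  moreover have "degree (p - q) < degree f"
    using assms(1,2) degree_diff_le_max[of p q] by linarith
  ultimately show False by simp
qed

lemma low_expand:
  assumes "degree p < degree f"
  shows "poly_mat p X = (\<Sum>i<degree f. mat (coeff p i) ** mat_pow X i)"
proof -
  have "poly_mat p X = (\<Sum>i\<le>degree f - 1. mat (coeff p i) ** mat_pow X i)"
    by (rule poly_mat_bound) (use assms in auto)
  also have "{..degree f - 1} = {..<degree f}" using Dpos by auto
  finally show ?thesis .
qed

definition Lin :: "('a^'n^'n \<Rightarrow> 'a) set" where
  "Lin = {\<psi>. (\<forall>A\<in>K. \<forall>B\<in>K. \<psi> (A + B) = \<psi> A + \<psi> B) \<and> (\<forall>c. \<forall>A\<in>K. \<psi> (mat c ** A) = c * \<psi> A)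
      \<and> (\<forall>A. A \<notin> K \<longrightarrow> \<psi> A = 0)}"

lemma Lin_add: "\<psi> \<in> Lin \<Longrightarrow> A \<in> K \<Longrightarrow> B \<in> K \<Longrightarrow> \<psi> (A + B) = \<psi> A + \<psi> B"
  by (simp add: Lin_def)
lemma Lin_smul: "\<psi> \<in> Lin \<Longrightarrow> A \<in> K \<Longrightarrow> \<psi> (mat c ** A) = c * \<psi> A"
  by (simp add: Lin_def)
lemma Lin_out: "\<psi> \<in> Lin \<Longrightarrow> A \<notin> K \<Longrightarrow> \<psi> A = 0"
  by (simp add: Lin_def)
lemma Lin_0: "\<psi> \<in> Lin \<Longrightarrow> \<psi> 0 = 0"
  using Lin_smul[of \<psi> 0 0] by simp
lemma Lin_diff: "\<psi> \<in> Lin \<Longrightarrow> A \<in> K \<Longrightarrow> B \<in> K \<Longrightarrow> \<psi> (A - B) = \<psi> A - \<psi> B"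
  using Lin_add[of \<psi> "A - B" B] by simp
lemma Lin_sum: "\<psi> \<in> Lin \<Longrightarrow> (\<And>i. i \<in> S \<Longrightarrow> F i \<in> K) \<Longrightarrow> \<psi> (sum F S) = (\<Sum>i\<in>S. \<psi> (F i))"
proof (induction S rule: infinite_finite_induct)
  case (insert x F)
  then show ?case by (simp add: Lin_add)
qed (simp_all add: Lin_0)

lemma Lin_eq:
  assumes "\<psi> \<in> Lin" "\<psi>' \<in> Lin" "\<And>i. i < degree f \<Longrightarrow> \<psi> (mat_pow X i) = \<psi>' (mat_pow X i)"
  shows "\<psi> = \<psi>'"
proof
  fix A
  show "\<psi> A = \<psi>' A"
  proof (cases "A \<in> K")
    case True
    then obtain p where p: "degree p < degree f" "A = poly_mat p X" using K_red by blast
    have "\<psi> A = (\<Sum>i<degree f. coeff p i * \<psi> (mat_pow X i))"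
      using p assms(1) by (simp add: low_expand Lin_sum Lin_smul)
    also have "\<dots> = (\<Sum>i<degree f. coeff p i * \<psi>' (mat_pow X i))" using assms(3) by simp
    also have "\<dots> = \<psi>' A"
      using p assms(2) by (simp add: low_expand Lin_sum Lin_smul)
    finally show ?thesis .
  next
    case False
    then show ?thesis using assms Lin_out by metis
  qed
qed

lemma finite_K[simp]: "finite K" by (rule finite_subset[OF subset_UNIV finite_class.finite_UNIV])
lemma finite_Lin[simp]: "finite Lin" by (rule finite_subset[OF subset_UNIV finite_class.finite_UNIV])

lemma coeff_monsum: "coeff (\<Sum>i<(d::nat). monom (c i) i) j = (if j < d then c j else 0)"
  by (simp add: coeff_sum)

lemma degree_monsum: "degree (\<Sum>i<degree f. monom (c i) i) < degree f"
proof -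
  have "degree (\<Sum>i<degree f. monom (c i) i) \<le> degree f - 1"
    by (rule degree_le) (auto simp: coeff_monsum)
  then show ?thesis using Dpos by linarith
qed

lemma card_Lin_le: "card Lin \<le> card K"
proof -
  define P where "P \<psi> = (\<Sum>i<degree f. monom (\<psi> (mat_pow X i)) i)" for \<psi> :: "'a^'n^'n \<Rightarrow> 'a"
  have "inj_on (\<lambda>\<psi>. poly_mat (P \<psi>) X) Lin"
  proof (rule inj_onI)
    fix \<psi> \<psi>' assume a: "\<psi> \<in> Lin" "\<psi>' \<in> Lin" "poly_mat (P \<psi>) X = poly_mat (P \<psi>') X"
    have PP: "P \<psi> = P \<psi>'" unfolding P_def
      by (rule low_inj[OF degree_monsum degree_monsum]) (use a(3) in \<open>simp add: P_def\<close>)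
    have "\<psi> (mat_pow X i) = \<psi>' (mat_pow X i)" if i: "i < degree f" for i
    proof -
      have "coeff (P \<psi>) i = coeff (P \<psi>') i" using PP by simp
      then show ?thesis using i by (simp add: P_def coeff_monsum)
    qed
    then show "\<psi> = \<psi>'" using Lin_eq a by blast
  qed
  moreover have "(\<lambda>\<psi>. poly_mat (P \<psi>) X) ` Lin \<subseteq> K" by auto
  ultimately show ?thesis using card_inj_on_le[OF _ _ finite_K] by blast
qed

lemma Lin_rep:
  assumes psi0: "\<psi>0 \<in> Lin" and A0: "A0 \<in> K" "\<psi>0 A0 \<noteq> 0" and psi: "\<psi> \<in> Lin"
  shows "\<exists>a\<in>K. \<forall>A\<in>K. \<psi> A = \<psi>0 (a ** A)"
proof -
  define \<Phi> where "\<Phi> a = (\<lambda>A. if A \<in> K then \<psi>0 (a ** A) else 0)" for a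
  have PhiLin: "\<Phi> a \<in> Lin" if a: "a \<in> K" for a
  proof -
    have *: "a ** (mat c ** A) = mat c ** (a ** A)" for c and A :: "'a^'n^'n"
      by (metis mat_comm matrix_mul_assoc)
    show ?thesis unfolding Lin_def \<Phi>_def using a psi0
      by (auto simp: matrix_add_ldistrib Lin_add Lin_smul *)
  qed
  have inj: "inj_on \<Phi> K"
  proof (rule inj_onI, rule ccontr)
    fix a b assume ab: "a \<in> K" "b \<in> K" "\<Phi> a = \<Phi> b" "a \<noteq> b"
    then have d0: "a - b \<noteq> 0" "a - b \<in> K" by auto
    then obtain e where e: "e \<in> K" "e ** (a - b) = mat 1" using K_inv by blast
    have "\<psi>0 (a ** (e ** A0)) = \<psi>0 (b ** (e ** A0))"
      using fun_cong[OF ab(3), of "e ** A0"] e A0 unfolding \<Phi>_def by simp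
    then have "\<psi>0 ((a - b) ** (e ** A0)) = 0"
      using psi0 ab e A0 by (simp add: matrix_sub_rdistrib Lin_diff)
    moreover have "(a - b) ** (e ** A0) = A0"
      using e d0 K_comm[of e "a - b"] by (simp add: matrix_mul_assoc)
    ultimately show False using A0 by simp
  qed
  have sub: "\<Phi> ` K \<subseteq> Lin" using PhiLin by auto
  have "card (\<Phi> ` K) = card K" using card_image[OF inj] .
  then have "card (\<Phi> ` K) = card Lin" using card_Lin_le card_mono[OF finite_Lin sub] by linarith
  then have "\<Phi> ` K = Lin" using card_subset_eq[OF finite_Lin sub] by blast
  then obtain a where a: "a \<in> K" "\<psi> = \<Phi> a" using psi by blast
  have "\<forall>A\<in>K. \<psi> A = \<psi>0 (a ** A)" unfolding a(2) \<Phi>_def by simp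
  then show ?thesis using a(1) by (intro bexI[of _ a])
qed

end




definition fm :: "('a::field^'n \<Rightarrow> 'a^'n \<Rightarrow> 'a) \<Rightarrow> 'a^'n^'n \<Rightarrow> bool" where
  "fm C X \<longleftrightarrow> bilinear_form C \<and> (\<forall>v w. C v w = C w v) \<and> (\<forall>v w. C (v v* X) (w v* X) = C v w)"

lemma char2_add: "(2::'a::field) = 0 \<Longrightarrow> x + x = (0::'a)"
  by (metis mult_2 mult_zero_left)
lemma char2_neg: "(2::'a::field) = 0 \<Longrightarrow> - x = (x::'a)"
  using char2_add by (metis add_eq_0_iff)
lemma char2_mat_add: "(2::'a::field) = 0 \<Longrightarrow> A + A = (0::'a^'n^'m)"
  by (simp add: vec_eq_iff char2_add)
lemma char2_mat_neg: "(2::'a::field) = 0 \<Longrightarrow> - A = (A::'a^'n^'m)"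
  by (simp add: vec_eq_iff char2_neg)
lemma char2_vec_neg: "(2::'a::field) = 0 \<Longrightarrow> - A = (A::'a^'n)"
  by (simp add: vec_eq_iff char2_neg)

context mpf
begin

lemma poly_mat_K: "B \<in> K \<Longrightarrow> poly_mat p B \<in> K"
  by (induction p) (simp_all add: poly_mat_pCons)

lemma poly_mat_Xi_comm: "poly_mat p Xi ** Xi = Xi ** poly_mat p Xi"
  by (rule poly_mat_comm)

lemma adj_poly:
  assumes bil: "bilinear_form C" and inv: "\<And>v w. C (v v* X) (w v* X) = C v w"
  shows "C (v v* poly_mat p X) w = C v (w v* poly_mat p Xi)"
proof (induction p arbitrary: w)
  case 0
  then show ?case using bil by (simp add: bf_zeroL bf_zeroR)
next
  case (pCons a p)
  have sh: "C (u v* X) w' = C u (w' v* Xi)" for u w'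
  proof -
    have "C (u v* X) w' = C (u v* X) ((w' v* Xi) v* X)"
      using Xi_facts by (simp add: vm_assoc[symmetric])
    then show ?thesis using inv by simp
  qed
  have "C (v v* poly_mat (pCons a p) X) w = C (a *s v + (v v* poly_mat p X) v* X) w"
    by (simp add: poly_mat_pCons vm_add_right vm_mat vm_assoc)
  also have "\<dots> = a * C v w + C v ((w v* Xi) v* poly_mat p Xi)"
    using bil by (simp add: bf_addL bf_scaleL sh pCons.IH)
  also have "(w v* Xi) v* poly_mat p Xi = w v* (poly_mat p Xi ** Xi)"
    by (simp add: vm_assoc poly_mat_Xi_comm)
  also have "a * C v w + C v (w v* (poly_mat p Xi ** Xi)) = C v (w v* poly_mat (pCons a p) Xi)"
    using bil by (simp add: poly_mat_pCons vm_add_right vm_mat bf_addR bf_scaleR)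
  finally show ?case .
qed

definition sig where "sig A = poly_mat (SOME p. A = poly_mat p X) Xi"

lemma sig_K[simp]: "sig A \<in> K"
  unfolding sig_def using Xi_facts by (simp add: poly_mat_K)

lemma adj:
  assumes "fm C X" "A \<in> K"
  shows "C (v v* A) w = C v (w v* sig A)"
proof -
  obtain p where "A = poly_mat p X" using assms(2) by (auto elim!: K_E)
  then have "A = poly_mat (SOME p. A = poly_mat p X) X" by (metis (mono_tags) someI)
  then show ?thesis unfolding sig_def using assms(1) adj_poly unfolding fm_def by metis
qed

lemma adj':
  assumes "fm C X" "A \<in> K"
  shows "C w (v v* A) = C (w v* sig A) v"
  using adj[OF assms, of v w] assms(1) unfolding fm_def by metis

end

locale mpf_form = mpf X f for X :: "'a::{finite,field}^'n::finite^'n" and f +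
  fixes \<beta> :: "'a^'n \<Rightarrow> 'a^'n \<Rightarrow> 'a"
  assumes fmb: "fm \<beta> X" and ndb: "nondegenerate \<beta>" and ch2: "(2::'a) = 0"
begin

lemma bilb: "bilinear_form \<beta>" using fmb by (simp add: fm_def)
lemma symb: "\<beta> v w = \<beta> w v" using fmb by (simp add: fm_def)

lemma mat_eq_form:
  assumes "\<And>v w. \<beta> v (w v* P) = \<beta> v (w v* P')" shows "P = P'"
proof (rule mat_eq_rows)
  fix w
  have "\<beta> (w v* P - w v* P') v = 0" for v
  proof -
    have "\<beta> (w v* P - w v* P') v = \<beta> v (w v* P - w v* P')" by (rule symb)
    also have "\<dots> = 0" using assms[of v w] bilb by (simp add: bf_diffR)
    finally show ?thesis .
  qed
  then have "w v* P - w v* P' = 0" using ndb unfolding nondegenerate_def by blast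
  then show "w v* P = w v* P'" by simp
qed

lemma sig_mult: "A \<in> K \<Longrightarrow> B \<in> K \<Longrightarrow> sig (A ** B) = sig A ** sig B"
proof (rule mat_eq_form)
  fix v w assume AB: "A \<in> K" "B \<in> K"
  have "\<beta> v (w v* sig (A ** B)) = \<beta> (v v* (A ** B)) w" using adj[OF fmb, of "A ** B" v w] AB by simp
  also have "\<dots> = \<beta> ((v v* A) v* B) w" by (simp add: vm_assoc)
  also have "\<dots> = \<beta> (v v* A) (w v* sig B)" using adj[OF fmb AB(2)] by simp
  also have "\<dots> = \<beta> v ((w v* sig B) v* sig A)" using adj[OF fmb AB(1)] by simp
  also have "\<dots> = \<beta> v (w v* (sig A ** sig B))" by (simp add: vm_assoc[symmetric] K_comm)
  finally show "\<beta> v (w v* sig (A ** B)) = \<beta> v (w v* (sig A ** sig B))" .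
qed

lemma sig_add: "A \<in> K \<Longrightarrow> B \<in> K \<Longrightarrow> sig (A + B) = sig A + sig B"
proof (rule mat_eq_form)
  fix v w assume AB: "A \<in> K" "B \<in> K"
  have "\<beta> v (w v* sig (A + B)) = \<beta> (v v* (A + B)) w" using adj[OF fmb, of "A + B" v w] AB by simp
  also have "\<dots> = \<beta> (v v* A) w + \<beta> (v v* B) w" using bilb by (simp add: vm_add_right bf_addL)
  also have "\<dots> = \<beta> v (w v* sig A) + \<beta> v (w v* sig B)" using adj[OF fmb] AB by simp
  also have "\<dots> = \<beta> v (w v* (sig A + sig B))" using bilb by (simp add: vm_add_right bf_addR)
  finally show "\<beta> v (w v* sig (A + B)) = \<beta> v (w v* (sig A + sig B))" .
qed

lemma sig_mat: "sig (mat c) = mat c"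
proof (rule mat_eq_form)
  fix v w
  show "\<beta> v (w v* sig (mat c)) = \<beta> v (w v* mat c)"
    using adj[OF fmb K_mat[of c], of v w] bilb by (simp add: vm_mat bf_scaleL bf_scaleR)
qed

lemma sig_X: "sig X = Xi"
proof (rule mat_eq_form)
  fix v w
  have "\<beta> v (w v* sig X) = \<beta> (v v* X) w" using adj[OF fmb K_X] by simp
  also have "\<dots> = \<beta> (v v* X) ((w v* Xi) v* X)" using Xi_facts by (simp add: vm_assoc[symmetric])
  also have "\<dots> = \<beta> v (w v* Xi)" using fmb by (simp add: fm_def)
  finally show "\<beta> v (w v* sig X) = \<beta> v (w v* Xi)" .
qed

lemma sig_sig: "A \<in> K \<Longrightarrow> sig (sig A) = A"
proof (rule mat_eq_form)
  fix v w assume A: "A \<in> K"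
  have "\<beta> v (w v* sig (sig A)) = \<beta> (v v* sig A) w" using adj[OF fmb] by simp
  also have "\<dots> = \<beta> w (v v* sig A)" by (simp add: symb)
  also have "\<dots> = \<beta> (w v* A) v" using adj[OF fmb A] by simp
  also have "\<dots> = \<beta> v (w v* A)" by (simp add: symb)
  finally show "\<beta> v (w v* sig (sig A)) = \<beta> v (w v* A)" .
qed

lemma sig_0[simp]: "sig 0 = 0" using sig_mat[of 0] by simp
lemma sig_1[simp]: "sig (mat 1) = mat 1" using sig_mat[of 1] by simp
lemma sig_neq0: "A \<in> K \<Longrightarrow> A \<noteq> 0 \<Longrightarrow> sig A \<noteq> 0" using sig_sig by force
lemma sig_smul: "A \<in> K \<Longrightarrow> sig (mat c ** A) = mat c ** sig A"
  by (simp add: sig_mult sig_mat)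
lemma sig_diff: "A \<in> K \<Longrightarrow> B \<in> K \<Longrightarrow> sig (A - B) = sig A - sig B"
proof -
  assume AB: "A \<in> K" "B \<in> K"
  have "sig (A - B) + sig B = sig A" using sig_add[of "A - B" B] AB by simp
  then show ?thesis by (simp add: eq_diff_eq)
qed

end




definition ndg :: "('a::field^'n \<Rightarrow> 'a^'n \<Rightarrow> 'a) \<Rightarrow> ('a^'n) set \<Rightarrow> bool" where
  "ndg C U \<longleftrightarrow> (\<forall>u\<in>U. (\<forall>w\<in>U. C u w = 0) \<longrightarrow> u = 0)"

lemma neg_one_scale: "(-1) *s u = - (u::'a::comm_ring_1^'n)"
  by (simp add: vec_eq_iff)

context mpf
begin

definition ksub :: "('a^'n) set \<Rightarrow> bool" where
  "ksub U \<longleftrightarrow> 0 \<in> U \<and> (\<forall>u\<in>U. \<forall>w\<in>U. u + w \<in> U) \<and> (\<forall>c. \<forall>u\<in>U. c *s u \<in> U) \<and> (\<forall>u\<in>U. u v* X \<in> U)"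

definition good :: "('a^'n \<Rightarrow> 'a^'n \<Rightarrow> 'a) \<Rightarrow> 'a^'n \<Rightarrow> bool" where
  "good C v \<longleftrightarrow> (\<exists>A\<in>K. C v (v v* A) \<noteq> 0)"

definition perp :: "('a^'n \<Rightarrow> 'a^'n \<Rightarrow> 'a) \<Rightarrow> 'a^'n \<Rightarrow> ('a^'n) set \<Rightarrow> ('a^'n) set" where
  "perp C v U = {u\<in>U. \<forall>A\<in>K. C u (v v* A) = 0}"

definition linfun :: "('a^'n \<Rightarrow> 'a^'n \<Rightarrow> 'a) \<Rightarrow> 'a^'n \<Rightarrow> 'a^'n \<Rightarrow> 'a^'n^'n \<Rightarrow> 'a" where
  "linfun C x v = (\<lambda>B. if B \<in> K then C x (v v* B) else 0)"

lemma ksub_0: "ksub U \<Longrightarrow> 0 \<in> U" by (simp add: ksub_def)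
lemma ksub_add: "ksub U \<Longrightarrow> u \<in> U \<Longrightarrow> w \<in> U \<Longrightarrow> u + w \<in> U" by (simp add: ksub_def)
lemma ksub_scale: "ksub U \<Longrightarrow> u \<in> U \<Longrightarrow> c *s u \<in> U" by (simp add: ksub_def)
lemma ksub_X: "ksub U \<Longrightarrow> u \<in> U \<Longrightarrow> u v* X \<in> U" by (simp add: ksub_def)
lemma ksub_neg: "ksub U \<Longrightarrow> u \<in> U \<Longrightarrow> - u \<in> U"
  using ksub_scale[of U u "-1"] by (simp add: neg_one_scale)
lemma ksub_diff: "ksub U \<Longrightarrow> u \<in> U \<Longrightarrow> w \<in> U \<Longrightarrow> u - w \<in> U"
  using ksub_add[of U u "- w"] ksub_neg by simp

lemma ksub_poly: "ksub U \<Longrightarrow> u \<in> U \<Longrightarrow> u v* poly_mat p X \<in> U"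
proof (induction p arbitrary: u)
  case 0
  then show ?case by (simp add: ksub_0)
next
  case (pCons a p)
  have "u v* poly_mat (pCons a p) X = a *s u + (u v* poly_mat p X) v* X"
    by (simp add: poly_mat_pCons vm_add_right vm_mat vm_assoc)
  then show ?case using pCons by (simp add: ksub_add ksub_scale ksub_X)
qed

lemma ksub_K: "ksub U \<Longrightarrow> u \<in> U \<Longrightarrow> A \<in> K \<Longrightarrow> u v* A \<in> U"
  by (auto elim!: K_E simp: ksub_poly)

lemma linfun_Lin:
  assumes "bilinear_form C" shows "linfun C x v \<in> Lin"
  unfolding Lin_def linfun_def using assms
  by (auto simp: vm_add_right vm_matmul_mat bf_addR bf_scaleR)

lemma linfun_K: "A \<in> K \<Longrightarrow> linfun C x v A = C x (v v* A)"
  by (simp add: linfun_def)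

end

context mpf_form
begin

lemma S1b:
  assumes C: "fm C X" and g: "good C v" and A: "A \<in> K" and z: "\<forall>B\<in>K. C (v v* A) (v v* B) = 0"
  shows "A = 0"
proof (rule ccontr)
  assume A0: "A \<noteq> 0"
  then have "sig A \<noteq> 0" using sig_neq0 A by blast
  then obtain s where s: "s \<in> K" "s ** sig A = mat 1" using K_inv[OF sig_K] by blast
  obtain B0 where B0: "B0 \<in> K" "C v (v v* B0) \<noteq> 0" using g unfolding good_def by blast
  have "C (v v* A) (v v* (B0 ** s)) = C v ((v v* (B0 ** s)) v* sig A)" using adj[OF C A] by simp
  also have "(v v* (B0 ** s)) v* sig A = v v* B0"
    using s by (simp add: vm_assoc[symmetric] matrix_mul_assoc[symmetric])
  finally have "C (v v* A) (v v* (B0 ** s)) = C v (v v* B0)" .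
  moreover have "C (v v* A) (v v* (B0 ** s)) = 0" using z s B0 by simp
  ultimately show False using B0 by simp
qed

lemma S1a:
  assumes C: "fm C X" and U: "ksub U" and v: "v \<in> U" and g: "good C v" and u: "u \<in> U"
  shows "\<exists>A\<in>K. u - v v* A \<in> perp C v U"
proof -
  have bil: "bilinear_form C" using C by (simp add: fm_def)
  obtain B0 where B0: "B0 \<in> K" "C v (v v* B0) \<noteq> 0" using g unfolding good_def by blast
  obtain a where a: "a \<in> K" "\<forall>B\<in>K. linfun C u v B = linfun C v v (a ** B)"
    using Lin_rep[OF linfun_Lin[OF bil, of v v] _ _ linfun_Lin[OF bil, of u v], of B0] B0
    by (auto simp: linfun_K)
  have key: "C u (v v* B) = C (v v* sig a) (v v* B)" if B: "B \<in> K" for B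
  proof -
    have "C u (v v* B) = C v (v v* (a ** B))" using a B by (simp add: linfun_K)
    also have "\<dots> = C v ((v v* B) v* sig (sig a))"
      using a B by (simp add: sig_sig vm_assoc[symmetric] K_comm)
    also have "\<dots> = C (v v* sig a) (v v* B)" using adj[OF C sig_K[of a], of v "v v* B"] by simp
    finally show ?thesis .
  qed
  have "u - v v* sig a \<in> perp C v U"
    unfolding perp_def using key U u v bil by (auto simp: ksub_diff ksub_K bf_diffL)
  then show ?thesis using sig_K[of a] by blast
qed

lemma perp_ksub:
  assumes C: "fm C X" and U: "ksub U"
  shows "ksub (perp C v U)"
proof -
  have bil: "bilinear_form C" using C by (simp add: fm_def)
  have X: "C (u v* X) (v v* A) = 0" if "u \<in> perp C v U" "A \<in> K" for u A
  proof -
    have "C (u v* X) (v v* A) = C u ((v v* A) v* sig X)" using adj[OF C K_X] by simp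
    also have "\<dots> = C u (v v* (A ** sig X))" by (simp add: vm_assoc)
    also have "\<dots> = 0" using that unfolding perp_def by auto
    finally show ?thesis .
  qed
  show ?thesis unfolding ksub_def
    using U bil X by (auto simp: perp_def ksub_0 ksub_add ksub_scale ksub_X bf_addL bf_scaleL)
qed

lemma perp_sub: "perp C v U \<subseteq> U" by (auto simp: perp_def)

lemma perp_ndg:
  assumes C: "fm C X" and U: "ksub U" and v: "v \<in> U" and g: "good C v" and nd: "ndg C U"
  shows "ndg C (perp C v U)"
  unfolding ndg_def
proof (intro ballI impI)
  fix z assume z: "z \<in> perp C v U" and zw: "\<forall>w\<in>perp C v U. C z w = 0"
  have bil: "bilinear_form C" using C by (simp add: fm_def)
  have "C z u = 0" if u: "u \<in> U" for u
  proof -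
    obtain A where A: "A \<in> K" "u - v v* A \<in> perp C v U" using S1a[OF C U v g u] by blast
    have "C z u = C z (v v* A) + C z (u - v v* A)" using bil by (simp add: bf_diffR)
    also have "\<dots> = 0" using z zw A unfolding perp_def by auto
    finally show ?thesis .
  qed
  then show "z = 0" using nd z unfolding ndg_def perp_def by auto
qed

lemma card_split:
  assumes C: "fm C X" and U: "ksub U" and v: "v \<in> U" and g: "good C v"
  shows "card U = card K * card (perp C v U)"
proof -
  have bil: "bilinear_form C" using C by (simp add: fm_def)
  let ?h = "\<lambda>(A, w). v v* A + w"
  have inj: "inj_on ?h (K \<times> perp C v U)"
  proof (rule inj_onI, clarify)
    fix A w A' w' assume a: "A \<in> K" "w \<in> perp C v U" "A' \<in> K" "w' \<in> perp C v U"
      "v v* A + w = v v* A' + w'"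
    then have e: "v v* (A - A') = w' - w" by (simp add: vm_diff_right algebra_simps)
    have "\<forall>B\<in>K. C (v v* (A - A')) (v v* B) = 0"
      unfolding e using a(2,4) bil unfolding perp_def by (auto simp: bf_diffL)
    then have "A - A' = 0" using S1b[OF C g, of "A - A'"] a by simp
    then show "A = A' \<and> w = w'" using a(5) by simp
  qed
  have img: "?h ` (K \<times> perp C v U) = U"
  proof
    show "?h ` (K \<times> perp C v U) \<subseteq> U"
      using U v by (auto simp: perp_def ksub_add ksub_K)
    show "U \<subseteq> ?h ` (K \<times> perp C v U)"
    proof
      fix u assume u: "u \<in> U"
      obtain A where A: "A \<in> K" "u - v v* A \<in> perp C v U" using S1a[OF C U v g u] by blast
      then have "u = ?h (A, u - v v* A)" by simp
      then show "u \<in> ?h ` (K \<times> perp C v U)" using A by blast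
    qed
  qed
  have "card U = card (K \<times> perp C v U)" using card_image[OF inj] img by simp
  then show ?thesis by (simp add: card_cartesian_product)
qed

end




context mpf_form
begin

lemma XpXi:
  assumes D2: "degree f > 1" shows "X + Xi \<noteq> 0"
proof
  assume h: "X + Xi = 0"
  have p: "poly_mat [:1,0,1:] X = mat 1 + X ** X"
    by (simp add: poly_mat_pCons add.commute)
  have "X ** X = X ** (X + Xi) - X ** Xi"
    by (simp add: matrix_add_ldistrib)
  also have "\<dots> = - mat 1" using h Xi_facts by simp
  finally have "poly_mat [:1,0,1:] X = 0" using p by simp
  then have d: "f dvd [:1,0,1:]" by (rule min_dvd)
  have "[:1,0,1:] = [:1,1:] * ([:1,1:] :: 'a poly)"
    using ch2 by simp
  then have "f dvd [:1,1:] * [:1,1:]" using d by simp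
  then have "f dvd [:1,1:] \<or> f dvd [:1,1:]"
    by (rule prime_elem_dvd_multD[OF field_poly_irreducible_imp_prime[OF irr]])
  then have "f dvd [:1,1:]" by simp
  then have "degree f \<le> degree ([:1,1:] :: 'a poly)" by (rule dvd_imp_degree_le) simp
  then show False using D2 by simp
qed

lemma S2:
  assumes C: "fm C X" and U: "ksub U" and nd: "ndg C U" and u0: "u0 \<in> U" "u0 \<noteq> 0"
    and E0: "X + Xi \<noteq> 0"
  shows "\<exists>v\<in>U. good C v"
proof (rule ccontr)
  assume "\<not> (\<exists>v\<in>U. good C v)"
  then have ng: "\<And>v A. v \<in> U \<Longrightarrow> A \<in> K \<Longrightarrow> C v (v v* A) = 0" unfolding good_def by blast
  have bil: "bilinear_form C" using C by (simp add: fm_def)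
  have symC: "\<And>x y. C x y = C y x" using C by (simp add: fm_def)
  have kill: "C a (b v* (X + Xi)) = 0" if ab: "a \<in> U" "b \<in> U" for a b
  proof -
    have "C (a + b) ((a + b) v* X) = 0" using ng ab U by (simp add: ksub_add)
    then have "C a (a v* X) + C a (b v* X) + (C b (a v* X) + C b (b v* X)) = 0"
      using bil by (simp add: vector_matrix_left_distrib bf_addL bf_addR)
    then have "C a (b v* X) + C b (a v* X) = 0" using ng ab by simp
    moreover have "C b (a v* X) = C a (b v* Xi)"
      using symC[of b] adj[OF C K_X, of a b] sig_X by simp
    ultimately show ?thesis using bil by (simp add: vm_add_right bf_addR)
  qed
  obtain e where e: "e \<in> K" "e ** (X + Xi) = mat 1" using K_inv[of "X + Xi"] E0 Xi_facts by auto
  have "C a w = 0" if aw: "a \<in> U" "w \<in> U" for a w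
  proof -
    have "(w v* e) v* (X + Xi) = w" using e by (simp add: vm_assoc[symmetric])
    then show ?thesis using kill[OF aw(1), of "w v* e"] ksub_K[OF U aw(2) e(1)] by simp
  qed
  then show False using nd u0 unfolding ndg_def by blast
qed

lemma perp_uniq:
  assumes C: "fm C X" and g: "good C v" and A: "A \<in> K" "A' \<in> K"
    and p: "u - v v* A \<in> perp C v U" "u - v v* A' \<in> perp C v U"
  shows "A = A'"
proof -
  have bil: "bilinear_form C" using C by (simp add: fm_def)
  have e: "v v* (A - A') = (u - v v* A') - (u - v v* A)" by (simp add: vm_diff_right)
  have "\<forall>B\<in>K. C (v v* (A - A')) (v v* B) = 0"
    unfolding e using p bil unfolding perp_def by (auto simp: bf_diffL)
  then have "A - A' = 0" using S1b[OF C g, of "A - A'"] A by simp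
  then show ?thesis by simp
qed

lemma sqrt_K0:
  assumes a: "a \<in> K" "sig a = a"
  shows "\<exists>b\<in>K. sig b = b \<and> b ** b = a"
proof -
  define K0 where "K0 = {x\<in>K. sig x = x}"
  have sub: "(\<lambda>x. x ** x) ` K0 \<subseteq> K0"
    unfolding K0_def by (auto simp: sig_mult)
  have inj: "inj_on (\<lambda>x. x ** x) K0"
  proof (rule inj_onI)
    fix x y assume xy: "x \<in> K0" "y \<in> K0" "x ** x = y ** y"
    then have xyK: "x \<in> K" "y \<in> K" unfolding K0_def by auto
    have "(x + y) ** (x + y) = (x ** x + y ** y) + (x ** y + y ** x)"
      by (simp add: matrix_add_ldistrib matrix_add_rdistrib algebra_simps)
    also have "x ** x + y ** y = 0" using xy(3) ch2 by (simp add: char2_mat_add)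
    also have "x ** y + y ** x = 0" using K_comm[OF xyK] ch2 by (simp add: char2_mat_add)
    finally have "(x + y) ** (x + y) = 0" by simp
    then have "x + y = 0" using K_domain[of "x + y" "x + y"] xyK by auto
    then have "x = - y" by (simp add: eq_neg_iff_add_eq_0)
    then show "x = y" using ch2 by (simp add: char2_mat_neg)
  qed
  have fin: "finite K0" by (rule finite_subset[OF subset_UNIV finite_class.finite_UNIV])
  have "(\<lambda>x. x ** x) ` K0 = K0"
    using card_subset_eq[OF fin sub] card_image[OF inj] by simp
  moreover have "a \<in> K0" using a unfolding K0_def by simp
  ultimately obtain b where "b \<in> K0" "a = b ** b" by blast
  then show ?thesis unfolding K0_def by auto
qed

lemma S3:
  assumes C: "fm C X" and C': "fm C' X" and g: "good C v" and g': "good C' v'"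
  shows "\<exists>c\<in>K. \<forall>A\<in>K. \<forall>B\<in>K. C (v v* (c ** A)) (v v* (c ** B)) = C' (v' v* A) (v' v* B)"
proof -
  have bil: "bilinear_form C" using C by (simp add: fm_def)
  have bil': "bilinear_form C'" using C' by (simp add: fm_def)
  have symC: "\<And>x y. C x y = C y x" using C by (simp add: fm_def)
  have symC': "\<And>x y. C' x y = C' y x" using C' by (simp add: fm_def)
  define \<phi> where "\<phi> = linfun C v v"
  define \<phi>' where "\<phi>' = linfun C' v' v'"
  have L: "\<phi> \<in> Lin" "\<phi>' \<in> Lin" unfolding \<phi>_def \<phi>'_def using linfun_Lin bil bil' by auto
  obtain B0 where B0: "B0 \<in> K" "\<phi> B0 \<noteq> 0" using g unfolding good_def \<phi>_def by (auto simp: linfun_K)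
  obtain B1 where B1: "B1 \<in> K" "\<phi>' B1 \<noteq> 0" using g' unfolding good_def \<phi>'_def by (auto simp: linfun_K)
  obtain a where a: "a \<in> K" "\<forall>B\<in>K. \<phi>' B = \<phi> (a ** B)"
    using Lin_rep[OF L(1) B0 L(2)] by blast
  have inv: "\<phi> (sig x) = \<phi> x" if x: "x \<in> K" for x
  proof -
    have "\<phi> (sig x) = C v (v v* sig x)" using x by (simp add: \<phi>_def linfun_K)
    also have "\<dots> = C (v v* x) v" using adj[OF C x, of v v] by simp
    also have "\<dots> = \<phi> x" using x by (simp add: \<phi>_def linfun_K symC)
    finally show ?thesis .
  qed
  have inv': "\<phi>' (sig x) = \<phi>' x" if x: "x \<in> K" for x
  proof -
    have "\<phi>' (sig x) = C' v' (v' v* sig x)" using x by (simp add: \<phi>'_def linfun_K)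
    also have "\<dots> = C' (v' v* x) v'" using adj[OF C' x, of v' v'] by simp
    also have "\<dots> = \<phi>' x" using x by (simp add: \<phi>'_def linfun_K symC')
    finally show ?thesis .
  qed
  have siga: "sig a = a"
  proof (rule ccontr)
    assume ne: "sig a \<noteq> a"
    then obtain e where e: "e \<in> K" "e ** (sig a - a) = mat 1" using K_inv[of "sig a - a"] a by auto
    have z: "\<phi> ((sig a - a) ** B) = 0" if B: "B \<in> K" for B
    proof -
      have "\<phi> (sig a ** B) = \<phi> (sig (sig a ** B))" using inv B a by simp
      also have "\<dots> = \<phi> (a ** sig B)" using a B by (simp add: sig_mult sig_sig)
      also have "\<dots> = \<phi>' (sig B)" using a B by simp
      also have "\<dots> = \<phi>' B" using inv' B by simp
      also have "\<dots> = \<phi> (a ** B)" using a B by simp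
      finally show ?thesis using L a B by (simp add: matrix_sub_rdistrib Lin_diff)
    qed
    have "(sig a - a) ** (e ** B0) = B0"
      using e K_comm[of e "sig a - a"] a by (simp add: matrix_mul_assoc)
    then show False using z[of "e ** B0"] e B0 by simp
  qed
  obtain b where b: "b \<in> K" "sig b = b" "b ** b = a" using sqrt_K0[OF a(1) siga] by blast
  have "C (v v* (b ** A)) (v v* (b ** B)) = C' (v' v* A) (v' v* B)" if AB: "A \<in> K" "B \<in> K" for A B
  proof -
    have "C (v v* (b ** A)) (v v* (b ** B)) = C v ((v v* (b ** B)) v* sig (b ** A))"
      using adj[OF C] AB b by simp
    also have "(v v* (b ** B)) v* sig (b ** A) = v v* (a ** (B ** sig A))"
    proof -
      have "(b ** B) ** sig (b ** A) = (b ** B) ** (b ** sig A)" using b AB by (simp add: sig_mult)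
      also have "\<dots> = (b ** b) ** (B ** sig A)"
        using b AB K_comm[of B b] by (metis matrix_mul_assoc)
      finally show ?thesis using b by (simp add: vm_assoc[symmetric])
    qed
    also have "C v (v v* (a ** (B ** sig A))) = \<phi> (a ** (B ** sig A))"
      using a AB by (simp add: \<phi>_def linfun_K)
    also have "\<dots> = \<phi>' (B ** sig A)" using a AB by simp
    also have "\<dots> = C' v' ((v' v* B) v* sig A)" using AB by (simp add: \<phi>'_def linfun_K vm_assoc)
    also have "\<dots> = C' (v' v* A) (v' v* B)" using adj[OF C' AB(1)] by simp
    finally show ?thesis .
  qed
  then show ?thesis using b(1) by blast
qed

end




context mpf_form
begin

definition iso where
  "iso C C' U U' k \<longleftrightarrow> (\<forall>u\<in>U'. k u \<in> U) \<and> (\<forall>u\<in>U'. k (u v* X) = k u v* X)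
     \<and> (\<forall>a\<in>U'. \<forall>b\<in>U'. C (k a) (k b) = C' a b) \<and> (\<forall>a\<in>U'. \<forall>b\<in>U'. k (a + b) = k a + k b)
     \<and> (\<forall>s. \<forall>a\<in>U'. k (s *s a) = s *s k a)"

lemma finite_set[simp]: "finite (S :: ('a^'n) set)"
  by (rule finite_subset[OF subset_UNIV finite_class.finite_UNIV])

lemma mat1_ne0: "mat 1 \<noteq> (0::'a^'n^'n)"
proof
  assume "mat 1 = (0::'a^'n^'n)"
  then have "(mat 1 :: 'a^'n^'n) $ undefined $ undefined = 0" by simp
  then show False by (simp add: mat_def)
qed

lemma card_K_ge2: "card K \<ge> 2"
proof -
  have "{0, mat 1} \<subseteq> K" by simp
  moreover have "card {0, mat 1 :: 'a^'n^'n} = 2" using mat1_ne0 by simp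
  ultimately show ?thesis by (metis card_mono finite_K)
qed

lemma card_pos: "0 \<in> S \<Longrightarrow> card (S :: ('a^'n) set) \<ge> 1"
  using card_0_eq[of S] by fastforce

lemma iso_ind:
  assumes C: "fm C X" and C': "fm C' X" and E0: "X + Xi \<noteq> 0"
  shows "card U = N \<Longrightarrow> ksub U \<Longrightarrow> ksub U' \<Longrightarrow> ndg C U \<Longrightarrow> ndg C' U' \<Longrightarrow> card U' = card U
    \<Longrightarrow> \<exists>k. iso C C' U U' k"
proof (induction N arbitrary: U U' rule: less_induct)
  case (less N)
  have bil: "bilinear_form C" using C by (simp add: fm_def)
  have bil': "bilinear_form C'" using C' by (simp add: fm_def)
  have symC: "\<And>x y. C x y = C y x" using C by (simp add: fm_def)
  have symC': "\<And>x y. C' x y = C' y x" using C' by (simp add: fm_def)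
  have U: "ksub U" and U': "ksub U'" using less by auto
  show ?case
  proof (cases "\<exists>u\<in>U. u \<noteq> 0")
    case False
    then have "U = {0}" using ksub_0[OF U] by blast
    then have "card U' = 1" using less by simp
    then obtain x where "U' = {x}" using card_1_singletonE by blast
    then have U'0: "U' = {0}" using ksub_0[OF U'] by simp
    have "iso C C' U U' (\<lambda>_. 0)" unfolding iso_def using U'0 \<open>U = {0}\<close> bil bil' by simp
    then show ?thesis by blast
  next
    case True
    then obtain u0 where u0: "u0 \<in> U" "u0 \<noteq> 0" by blast
    obtain v where v: "v \<in> U" "good C v" using S2[OF C U less.prems(4) u0 E0] by blast
    define P where "P = perp C v U"
    have cU: "card U = card K * card P" unfolding P_def by (rule card_split[OF C U v])
    have cP: "card P \<ge> 1" unfolding P_def using ksub_0[OF perp_ksub[OF C U]] by (rule card_pos)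
    have "card U \<ge> 2" using cU cP card_K_ge2
      by (metis mult.right_neutral mult_le_mono2 order.trans)
    then have "\<exists>u\<in>U'. u \<noteq> 0"
    proof -
      assume c2: "card U \<ge> 2"
      show ?thesis
      proof (rule ccontr)
        assume "\<not> (\<exists>u\<in>U'. u \<noteq> 0)"
        then have "U' = {0}" using ksub_0[OF U'] by blast
        then show False using c2 less.prems(6) by simp
      qed
    qed
    then obtain u0' where u0': "u0' \<in> U'" "u0' \<noteq> 0" by blast
    obtain v' where v': "v' \<in> U'" "good C' v'" using S2[OF C' U' less.prems(5) u0' E0] by blast
    define P' where "P' = perp C' v' U'"
    have cU': "card U' = card K * card P'" unfolding P'_def by (rule card_split[OF C' U' v'])
    have "card K * card P' = card K * card P" by (simp only: cU[symmetric] cU'[symmetric] less.prems(6))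
    moreover have "card K > 0" using card_K_ge2 by simp
    ultimately have cPP: "card P' = card P" by (simp only: mult_cancel_left) auto
    have "2 * card P \<le> card K * card P" using card_K_ge2 by (rule mult_le_mono1)
    moreover have "card P < 2 * card P" using cP by simp
    ultimately have PN: "card P < N" using cU less.prems(1) by linarith
    have P: "ksub P" "ndg C P" unfolding P_def using perp_ksub[OF C U] perp_ndg[OF C U v less.prems(4)] by auto
    have P': "ksub P'" "ndg C' P'" unfolding P'_def using perp_ksub[OF C' U'] perp_ndg[OF C' U' v' less.prems(5)] by auto
    obtain k2 where k2: "iso C C' P P' k2" using less.IH[OF PN refl P(1) P'(1) P(2) P'(2) cPP] by blast
    obtain c where c: "c \<in> K" "\<forall>A\<in>K. \<forall>B\<in>K. C (v v* (c ** A)) (v v* (c ** B)) = C' (v' v* A) (v' v* B)"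
      using S3[OF C C' v(2) v'(2)] by blast
    define \<pi> where "\<pi> u = (SOME A. A \<in> K \<and> u - v' v* A \<in> P')" for u
    have pi: "\<pi> u \<in> K \<and> u - v' v* \<pi> u \<in> P'" if "u \<in> U'" for u
    proof -
      have "\<exists>A. A \<in> K \<and> u - v' v* A \<in> P'" using S1a[OF C' U' v'(1) v'(2) that] unfolding P'_def by blast
      then show ?thesis unfolding \<pi>_def by (rule someI_ex)
    qed
    have piu: "\<pi> u = A" if "u \<in> U'" "A \<in> K" "u - v' v* A \<in> P'" for u A
      using perp_uniq[OF C' v'(2) _ that(2)] pi[OF that(1)] that(3) unfolding P'_def by blast
    have PU: "P \<subseteq> U" "P' \<subseteq> U'" unfolding P_def P'_def by (auto simp: perp_sub)
    define k where "k u = v v* (c ** \<pi> u) + k2 (u - v' v* \<pi> u)" for u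
    have k2P: "k2 x \<in> P" if "x \<in> P'" for x using k2 that unfolding iso_def by blast
    have "iso C C' U U' k" unfolding iso_def
    proof (intro conjI ballI allI)
      fix u assume u: "u \<in> U'"
      show "k u \<in> U" unfolding k_def
        using pi[OF u] k2P PU c U v by (auto intro!: ksub_add[OF U] ksub_K)
    next
      fix u assume u: "u \<in> U'"
      have uX: "u v* X \<in> U'" using ksub_X[OF U' u] .
      have e: "u v* X - v' v* (\<pi> u ** X) = (u - v' v* \<pi> u) v* X"
        by (simp add: vm_diff_left vm_assoc)
      have m: "u v* X - v' v* (\<pi> u ** X) \<in> P'"
        unfolding e using pi[OF u] ksub_X[OF P'(1)] by blast
      have "\<pi> (u v* X) = \<pi> u ** X"
        using piu[OF uX _ m] pi[OF u] by simp
      moreover have "k2 ((u - v' v* \<pi> u) v* X) = k2 (u - v' v* \<pi> u) v* X"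
        using k2 pi[OF u] unfolding iso_def by blast
      ultimately show "k (u v* X) = k u v* X" unfolding k_def
        using e by (simp add: vector_matrix_left_distrib vm_assoc matrix_mul_assoc)
    next
      fix a b assume a: "a \<in> U'" and b: "b \<in> U'"
      have "\<pi> (a + b) = \<pi> a + \<pi> b"
      proof (rule piu)
        show "a + b \<in> U'" using ksub_add[OF U' a b] .
        show "\<pi> a + \<pi> b \<in> K" using pi a b by simp
        have "a + b - v' v* (\<pi> a + \<pi> b) = (a - v' v* \<pi> a) + (b - v' v* \<pi> b)"
          by (simp add: vm_add_right)
        moreover have "(a - v' v* \<pi> a) + (b - v' v* \<pi> b) \<in> P'"
          using pi a b ksub_add[OF P'(1)] by blast
        ultimately show "a + b - v' v* (\<pi> a + \<pi> b) \<in> P'" by metis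
      qed
      moreover have "k2 ((a - v' v* \<pi> a) + (b - v' v* \<pi> b)) = k2 (a - v' v* \<pi> a) + k2 (b - v' v* \<pi> b)"
        using k2 pi a b unfolding iso_def by blast
      moreover have "a + b - v' v* (\<pi> a + \<pi> b) = (a - v' v* \<pi> a) + (b - v' v* \<pi> b)"
        by (simp add: vm_add_right)
      ultimately show "k (a + b) = k a + k b" unfolding k_def
        by (simp add: matrix_add_ldistrib vm_add_right algebra_simps)
    next
      fix s a assume a: "a \<in> U'"
      have e: "s *s a - v' v* (mat s ** \<pi> a) = s *s (a - v' v* \<pi> a)"
        by (simp add: vm_matmul_mat vector_ssub_ldistrib)
      have m: "s *s a - v' v* (mat s ** \<pi> a) \<in> P'"
        unfolding e using pi[OF a] ksub_scale[OF P'(1)] by blast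
      have "\<pi> (s *s a) = mat s ** \<pi> a"
        using piu[OF ksub_scale[OF U' a] _ m] pi[OF a] by simp
      moreover have "k2 (s *s (a - v' v* \<pi> a)) = s *s k2 (a - v' v* \<pi> a)"
        using k2 pi a unfolding iso_def by blast
      moreover have "c ** (mat s ** \<pi> a) = mat s ** (c ** \<pi> a)"
        by (metis mat_comm matrix_mul_assoc)
      ultimately show "k (s *s a) = s *s k a" unfolding k_def
        using e by (simp add: vm_matmul_mat vector_add_ldistrib)
    next
      fix a b assume a: "a \<in> U'" and b: "b \<in> U'"
      define xa where "xa = v v* (c ** \<pi> a)"
      define xb where "xb = v v* (c ** \<pi> b)"
      define ya where "ya = k2 (a - v' v* \<pi> a)"
      define yb where "yb = k2 (b - v' v* \<pi> b)"
      have ya: "ya \<in> P" and yb: "yb \<in> P" unfolding ya_def yb_def using k2P pi a b by auto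
      have z1: "C ya xb = 0" using ya pi[OF b] c(1) unfolding xb_def P_def perp_def by auto
      have z2: "C xa yb = 0" using yb pi[OF a] c(1) symC unfolding xa_def P_def perp_def by auto
      have t1: "C xa xb = C' (v' v* \<pi> a) (v' v* \<pi> b)" unfolding xa_def xb_def using c pi a b by simp
      have t2: "C ya yb = C' (a - v' v* \<pi> a) (b - v' v* \<pi> b)"
        unfolding ya_def yb_def using k2 pi a b unfolding iso_def by blast
      define xa' where "xa' = v' v* \<pi> a"
      define xb' where "xb' = v' v* \<pi> b"
      define ya' where "ya' = a - v' v* \<pi> a"
      define yb' where "yb' = b - v' v* \<pi> b"
      have z3: "C' ya' xb' = 0" using pi a b unfolding ya'_def xb'_def P'_def perp_def by auto
      have z4: "C' xa' yb' = 0" using pi a b symC' unfolding xa'_def yb'_def P'_def perp_def by auto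
      have ab: "a = xa' + ya'" "b = xb' + yb'" unfolding xa'_def ya'_def xb'_def yb'_def by simp_all
      have "C (k a) (k b) = C xa xb + C xa yb + (C ya xb + C ya yb)"
        unfolding k_def xa_def[symmetric] xb_def[symmetric] ya_def[symmetric] yb_def[symmetric]
        using bil by (simp add: bf_addL bf_addR)
      also have "\<dots> = C' xa' xb' + C' xa' yb' + (C' ya' xb' + C' ya' yb')"
        using z1 z2 z3 z4 t1 t2 unfolding xa'_def xb'_def ya'_def yb'_def by simp
      also have "\<dots> = C' (xa' + ya') (xb' + yb')"
        by (simp only: bf_addL[OF bil'] bf_addR[OF bil']) (simp add: algebra_simps)
      also have "\<dots> = C' a b" using ab by simp
      finally show "C (k a) (k b) = C' a b" .
    qed
    then show ?thesis by blast
  qed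
qed

end




lemma lin_to_mat:
  fixes kf :: "'a::field^'n \<Rightarrow> 'a^'n"
  assumes add: "\<And>x y. kf (x + y) = kf x + kf y" and sc: "\<And>c x. kf (c *s x) = c *s kf x"
  shows "\<exists>M. \<forall>u. u v* M = kf u"
proof -
  have lin: "Vector_Spaces.linear (*s) (*s) kf"
    unfolding Vector_Spaces.linear_iff using vec.vector_space_axioms add sc by blast
  have "u v* transpose (matrix kf) = kf u" for u
    using matrix_works[OF lin] by simp
  then show ?thesis by blast
qed

lemma inj_invertible:
  fixes M :: "'a::{field,finite}^'n^'n"
  assumes ker: "\<And>u. u v* M = 0 \<Longrightarrow> u = 0"
  shows "invertible M"
proof -
  have inj: "inj (\<lambda>u. transpose M *v u)"
  proof (rule injI)
    fix u w assume "transpose M *v u = transpose M *v w"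
    then have "(u - w) v* M = 0" by (simp add: vm_diff_left)
    then have "u - w = 0" by (rule ker)
    then show "u = w" by simp
  qed
  then have "surj (\<lambda>u. transpose M *v u)" by (rule finite_UNIV_inj_surj[OF finite_class.finite_UNIV])
  then have "invertible (transpose M)" using inj invertible_eq_bij bij_def by metis
  then obtain N where "transpose M ** N = mat 1" unfolding invertible_def by blast
  then have "transpose N ** M = mat 1" by (metis matrix_transpose_mul transpose_mat transpose_transpose)
  then show ?thesis using invertible_left_inverse by blast
qed

context mpf_form
begin

lemma phi3_core:
  assumes D2: "degree f > 1" and C': "fm C' X" and nd': "nondegenerate C'"
  shows "\<exists>k. invertible k \<and> k ** X = X ** k \<and> (\<forall>a b. \<beta> (a v* k) (b v* k) = C' a b)"
proof -
  have U: "ksub UNIV" by (simp add: ksub_def)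
  have n1: "ndg \<beta> UNIV" using ndb by (simp add: ndg_def nondegenerate_def)
  have n2: "ndg C' UNIV" using nd' by (simp add: ndg_def nondegenerate_def)
  obtain kf where kf: "iso \<beta> C' UNIV UNIV kf"
    using iso_ind[OF fmb C' XpXi[OF D2] refl U U n1 n2 refl] by blast
  then have add: "\<And>x y. kf (x + y) = kf x + kf y" and sc: "\<And>c x. kf (c *s x) = c *s kf x"
    and Xc: "\<And>u. kf (u v* X) = kf u v* X" and iss: "\<And>a b. \<beta> (kf a) (kf b) = C' a b"
    unfolding iso_def by auto
  obtain M where M: "\<And>u. u v* M = kf u" using lin_to_mat[OF add sc] by blast
  have "invertible M"
  proof (rule inj_invertible)
    fix u assume "u v* M = 0"
    then have "\<forall>w. C' u w = 0" using iss M bilb by (metis bf_zeroL)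
    then show "u = 0" using nd' unfolding nondegenerate_def by blast
  qed
  moreover have "M ** X = X ** M"
    by (rule mat_eq_rows) (simp add: vm_assoc M Xc)
  moreover have "\<forall>a b. \<beta> (a v* M) (b v* M) = C' a b" using M iss by simp
  ultimately show ?thesis by blast
qed

end




lemma gen_left_inv:
  fixes X :: "'a::field^'n^'n"
  assumes fX: "poly_mat f X = 0" and c0: "coeff f 0 \<noteq> 0"
  shows "\<exists>r. poly_mat r X ** X = mat 1"
proof -
  obtain q where fq: "f = pCons (coeff f 0) q"
    by (metis coeff_pCons_0 pCons_cases)
  have "mat (coeff f 0) + poly_mat q X ** X = 0" using fX fq poly_mat_pCons by metis
  then have "poly_mat q X ** X = - mat (coeff f 0)" by (simp add: eq_neg_iff_add_eq_0 add.commute)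
  then have "(mat (- inverse (coeff f 0)) ** poly_mat q X) ** X = mat (- inverse (coeff f 0)) ** (- mat (coeff f 0))"
    by (simp add: matrix_mul_assoc[symmetric])
  also have "\<dots> = mat 1" using c0 by (simp add: matrix_neg_right mat_mult[symmetric] mat_neg[symmetric])
  finally have h: "(mat (- inverse (coeff f 0)) ** poly_mat q X) ** X = mat 1" .
  show ?thesis by (intro exI[of _ "smult (- inverse (coeff f 0)) q"]) (simp only: poly_mat_smult h)
qed

lemma poly_mat_compose: "poly_mat p (poly_mat r X) = poly_mat (pcompose p r) X"
  by (induction p) (simp_all add: poly_mat_pCons pcompose_pCons poly_mat_add poly_mat_mult poly_mat_commute)

lemma adj_gen:
  assumes bil: "bilinear_form C" and inv: "\<And>v w. C (v v* X) (w v* X) = C v w"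
    and XXi: "X ** Xi = mat 1" "Xi ** X = mat 1"
  shows "C (v v* poly_mat p X) w = C v (w v* poly_mat p Xi)"
proof (induction p arbitrary: w)
  case 0
  then show ?case using bil by (simp add: bf_zeroL bf_zeroR)
next
  case (pCons a p)
  have sh: "C (u v* X) w' = C u (w' v* Xi)" for u w'
  proof -
    have "C (u v* X) w' = C (u v* X) ((w' v* Xi) v* X)"
      using XXi by (simp add: vm_assoc[symmetric])
    then show ?thesis using inv by simp
  qed
  have "C (v v* poly_mat (pCons a p) X) w = C (a *s v + (v v* poly_mat p X) v* X) w"
    by (simp add: poly_mat_pCons vm_add_right vm_mat vm_assoc)
  also have "\<dots> = a * C v w + C v ((w v* Xi) v* poly_mat p Xi)"
    using bil by (simp add: bf_addL bf_scaleL sh pCons.IH)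
  also have "(w v* Xi) v* poly_mat p Xi = w v* (poly_mat p Xi ** Xi)"
    by (simp add: vm_assoc poly_mat_comm)
  also have "a * C v w + C v (w v* (poly_mat p Xi ** Xi)) = C v (w v* poly_mat (pCons a p) Xi)"
    using bil by (simp add: poly_mat_pCons vm_add_right vm_mat bf_addR bf_scaleR)
  finally show ?case .
qed

lemma pow_cancel:
  assumes "Xi ** X = mat (1::'a::comm_ring_1)"
  shows "mat_pow Xi j ** mat_pow X j = mat 1"
proof (induction j)
  case (Suc j)
  have "mat_pow Xi (Suc j) ** mat_pow X (Suc j) = mat_pow Xi j ** (Xi ** X) ** mat_pow X j"
    by (simp add: mat_pow_Suc mat_pow_comm matrix_mul_assoc)
  then show ?case using Suc assms by simp
qed simp

lemma reflect_mat:
  fixes X :: "'a::comm_ring_1^'n^'n"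
  assumes XXi: "Xi ** X = mat 1"
  shows "poly_mat (reflect_poly p) Xi = mat_pow Xi (degree p) ** poly_mat p X"
proof -
  let ?d = "degree p"
  have "poly_mat (reflect_poly p) Xi = (\<Sum>i\<le>?d. mat (coeff (reflect_poly p) i) ** mat_pow Xi i)"
    by (rule poly_mat_bound) (rule degree_reflect_poly_le)
  also have "\<dots> = (\<Sum>i\<le>?d. mat (coeff p (?d - i)) ** mat_pow Xi i)"
    by (rule sum.cong) (auto simp: coeff_reflect_poly)
  also have "\<dots> = (\<Sum>j\<le>?d. mat (coeff p j) ** mat_pow Xi (?d - j))"
  proof -
    have "(\<Sum>i\<le>?d. mat (coeff p (?d - i)) ** mat_pow Xi i) = (\<Sum>i\<in>{0..?d}. mat (coeff p (?d - i)) ** mat_pow Xi i)"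
      by (simp add: atLeast0AtMost)
    also have "\<dots> = (\<Sum>j\<in>{0..?d}. (\<lambda>i. mat (coeff p (?d - i)) ** mat_pow Xi i) (?d + 0 - j))"
      by (rule sum.atLeastAtMost_rev[where g="\<lambda>i. mat (coeff p (?d - i)) ** mat_pow Xi i"])
    also have "\<dots> = (\<Sum>j\<le>?d. mat (coeff p j) ** mat_pow Xi (?d - j))"
      by (simp add: atLeast0AtMost)
    finally show ?thesis .
  qed
  also have "\<dots> = (\<Sum>j\<le>?d. mat (coeff p j) ** (mat_pow Xi ?d ** mat_pow X j))"
  proof (rule sum.cong)
    fix j assume j: "j \<in> {..?d}"
    have "mat_pow Xi ?d ** mat_pow X j = mat_pow Xi (?d - j) ** (mat_pow Xi j ** mat_pow X j)"
      using j by (simp add: mat_pow_add[symmetric] matrix_mul_assoc)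
    then show "mat (coeff p j) ** mat_pow Xi (?d - j) = mat (coeff p j) ** (mat_pow Xi ?d ** mat_pow X j)"
      using pow_cancel[OF XXi, of j] by simp
  qed simp
  also have "\<dots> = (\<Sum>j\<le>?d. mat_pow Xi ?d ** (mat (coeff p j) ** mat_pow X j))"
    by (rule sum.cong) (simp_all, metis matrix_mul_assoc mat_comm)
  also have "\<dots> = mat_pow Xi ?d ** poly_mat p X"
    by (simp add: poly_mat_def matrix_mul_sum_left)
  finally show ?thesis .
qed




definition gram :: "('a::field^'n \<Rightarrow> 'a^'n \<Rightarrow> 'a) \<Rightarrow> 'a^'n^'n" where
  "gram C = (\<chi> i j. C (axis i 1) (axis j 1))"

lemma gram_eq:
  assumes bil: "bilinear_form (C::'a::field^'n::finite \<Rightarrow> 'a^'n \<Rightarrow> 'a)"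
  shows "C x w = (\<Sum>j\<in>UNIV. (x v* gram C) $ j * w $ j)"
proof -
  have "C x w = C (\<Sum>i\<in>UNIV. x $ i *s axis i 1) (\<Sum>j\<in>UNIV. w $ j *s axis j 1)"
    by (simp add: basis_expansion)
  also have "\<dots> = (\<Sum>i\<in>UNIV. \<Sum>j\<in>UNIV. x $ i * (w $ j * C (axis i 1) (axis j 1)))"
    using bil by (simp add: bf_sumL bf_sumR bf_scaleL bf_scaleR)
  also have "\<dots> = (\<Sum>j\<in>UNIV. \<Sum>i\<in>UNIV. x $ i * (w $ j * C (axis i 1) (axis j 1)))"
    by (rule sum.swap)
  also have "\<dots> = (\<Sum>j\<in>UNIV. (x v* gram C) $ j * w $ j)"
    by (simp add: vector_matrix_mult_def gram_def sum_distrib_left sum_distrib_right algebra_simps)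
  finally show ?thesis .
qed

lemma gram_inv:
  assumes bil: "bilinear_form (C::'a::{field,finite}^'n::finite \<Rightarrow> 'a^'n \<Rightarrow> 'a)" and nd: "nondegenerate C"
  shows "invertible (gram C)"
proof (rule inj_invertible)
  fix u assume "u v* gram C = 0"
  then have "\<forall>w. C u w = 0" using gram_eq[OF bil] by simp
  then show "u = 0" using nd unfolding nondegenerate_def by blast
qed

lemma rep_matrix:
  assumes bil: "bilinear_form (C::'a::{field,finite}^'n::finite \<Rightarrow> 'a^'n \<Rightarrow> 'a)" and nd: "nondegenerate C"
    and bil': "bilinear_form C'"
  shows "\<exists>S. \<forall>a w. C (a v* S) w = C' a w"
proof -
  define S where "S = gram C' ** matrix_inv (gram C)"
  have "S ** gram C = gram C'"
    unfolding S_def using matrix_inv_both(2)[OF gram_inv[OF bil nd]] by (simp add: matrix_mul_assoc[symmetric])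
  then have "C (a v* S) w = C' a w" for a w
    using gram_eq[OF bil, of "a v* S"] gram_eq[OF bil', of a] by (simp add: vm_assoc[symmetric])
  then show ?thesis by blast
qed

locale phi2 =
  fixes X :: "'a::{finite,field}^'n::finite^'n" and g :: "'a poly"
    and \<beta> \<beta>' :: "'a^'n \<Rightarrow> 'a^'n \<Rightarrow> 'a"
  assumes minp: "is_min_poly X (g * dual_poly g)" and irr: "irreducible g" and lc: "lead_coeff g = 1"
    and c0: "coeff g 0 \<noteq> 0" and ne: "g \<noteq> dual_poly g"
    and fmb: "fm \<beta> X" and ndb: "nondegenerate \<beta>" and fmb': "fm \<beta>' X" and ndb': "nondegenerate \<beta>'"
begin

abbreviation "h \<equiv> dual_poly g"
abbreviation "c \<equiv> coeff g 0"

lemma h_def': "h = smult (inverse c) (reflect_poly g)" by (simp add: dual_poly_def)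

lemma fX: "poly_mat (g * h) X = 0" using minp by (simp add: is_min_poly_def)

lemma deg_h: "degree h = degree g" using c0 by (simp add: h_def')
lemma lc_h: "lead_coeff h = 1"
  using c0 lc by (simp add: h_def' deg_h coeff_reflect_poly)
lemma c0_h: "coeff h 0 = inverse c" using lc by (simp add: h_def')

lemma f_c0: "coeff (g * h) 0 \<noteq> 0" using c0 by (simp add: c0_h coeff_mult_0)

definition r where "r = (SOME r. poly_mat r X ** X = mat 1)"
definition Xi where "Xi = poly_mat r X"

lemma Xi_facts: "Xi ** X = mat 1" "X ** Xi = mat 1"
proof -
  show a: "Xi ** X = mat 1" unfolding Xi_def r_def
    using someI_ex[OF gen_left_inv[OF fX f_c0]] .
  then show "X ** Xi = mat 1" unfolding Xi_def by (simp add: poly_mat_comm)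
qed

lemma pXi: "poly_mat p Xi = poly_mat (pcompose p r) X"
  unfolding Xi_def by (rule poly_mat_compose)

lemma not_dvd: "\<not> g dvd h"
proof
  assume "g dvd h"
  then obtain q where q: "h = g * q" by (elim dvdE)
  have h0: "h \<noteq> 0" using lc_h by auto
  then have q0: "q \<noteq> 0" using q by auto
  have g0: "g \<noteq> 0" using lc by auto
  have "degree h = degree g + degree q" using q q0 g0 by (simp add: degree_mult_eq)
  then have "degree q = 0" using deg_h by simp
  then obtain a where a: "q = [:a:]" by (metis degree_eq_zeroE)
  have "lead_coeff h = lead_coeff g * lead_coeff q" using q by (simp add: lead_coeff_mult)
  then have "a = 1" using lc lc_h a by simp
  then show False using q a ne by simp
qed

definition u where "u = (SOME u. \<exists>v. u * h + v * g = 1)"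
definition v where "v = (SOME v. u * h + v * g = 1)"
lemma uv: "u * h + v * g = 1"
proof -
  have "\<exists>u v. u * h + v * g = 1" using bezout_irr[OF irr not_dvd] .
  then have "\<exists>v. u * h + v * g = 1" unfolding u_def by (rule someI_ex)
  then show ?thesis unfolding v_def by (rule someI_ex)
qed

definition E where "E = poly_mat (u * h) X"
definition F where "F = poly_mat (v * g) X"

lemma EF1: "E + F = mat 1" unfolding E_def F_def using uv by (simp add: poly_mat_add[symmetric])

lemma EF0: "E ** F = 0"
proof -
  have "E ** F = poly_mat ((u * h) * (v * g)) X" unfolding E_def F_def by (rule poly_mat_mult[symmetric])
  also have "(u * h) * (v * g) = (u * v) * (g * h)" by (simp add: algebra_simps)
  also have "poly_mat ((u * v) * (g * h)) X = poly_mat (u * v) X ** poly_mat (g * h) X" by (rule poly_mat_mult)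
  also have "\<dots> = 0" by (simp add: fX)
  finally show ?thesis .
qed

lemma FE0: "F ** E = 0" using EF0 unfolding E_def F_def by (simp add: poly_mat_commute)

lemma EE: "E ** E = E"
proof -
  have "E ** (E + F) = E" using EF1 by simp
  then show ?thesis using EF0 by (simp add: matrix_add_ldistrib)
qed

lemma FF: "F ** F = F"
proof -
  have "F ** (E + F) = F" using EF1 by simp
  then show ?thesis using FE0 by (simp add: matrix_add_ldistrib)
qed

lemma Zh: "poly_mat h Xi ** poly_mat h X = 0"
proof -
  have "poly_mat h Xi = mat (inverse c) ** (mat_pow Xi (degree g) ** poly_mat g X)"
    by (simp add: h_def' poly_mat_smult reflect_mat[OF Xi_facts(1)])
  then have "poly_mat h Xi ** poly_mat h X = mat (inverse c) ** mat_pow Xi (degree g) ** poly_mat (g * h) X"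
    by (simp add: matrix_mul_assoc poly_mat_mult)
  then show ?thesis by (simp add: fX)
qed

lemma g_refl: "g = smult c (reflect_poly h)"
  using c0 by (simp add: h_def' reflect_poly_smult)

lemma Zg: "poly_mat g Xi ** poly_mat g X = 0"
proof -
  have "poly_mat g Xi = mat c ** (mat_pow Xi (degree h) ** poly_mat h X)"
    by (subst g_refl) (simp add: poly_mat_smult reflect_mat[OF Xi_facts(1)])
  then have "poly_mat g Xi ** poly_mat g X = mat c ** mat_pow Xi (degree h) ** (poly_mat h X ** poly_mat g X)"
    by (simp add: matrix_mul_assoc)
  also have "poly_mat h X ** poly_mat g X = poly_mat (g * h) X" by (simp add: poly_mat_mult[symmetric] mult.commute)
  finally show ?thesis by (simp add: fX)
qed

lemma I_gen:
  assumes C: "fm C X" and Z: "poly_mat p Xi ** poly_mat p X = 0"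
  shows "C (x v* poly_mat (q * p) X) (y v* poly_mat (q * p) X) = 0"
proof -
  have bil: "bilinear_form C" and inv: "\<And>v w. C (v v* X) (w v* X) = C v w" using C by (auto simp: fm_def)
  have "C (x v* poly_mat (q * p) X) (y v* poly_mat (q * p) X) = C x ((y v* poly_mat (q * p) X) v* poly_mat (q * p) Xi)"
    by (rule adj_gen[OF bil inv Xi_facts(2,1)])
  also have "poly_mat (q * p) X ** poly_mat (q * p) Xi = 0"
  proof -
    have "poly_mat (q * p) X ** poly_mat (q * p) Xi = poly_mat ((q * p) * (pcompose q r * pcompose p r)) X"
      by (simp add: pXi poly_mat_mult pcompose_mult)
    also have "\<dots> = poly_mat (q * pcompose q r) X ** (poly_mat (pcompose p r) X ** poly_mat p X)"
      by (simp add: poly_mat_mult[symmetric] mult.assoc mult.left_commute mult.commute)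
    also have "\<dots> = 0" using Z by (simp add: pXi)
    finally show ?thesis .
  qed
  then have "(y v* poly_mat (q * p) X) v* poly_mat (q * p) Xi = 0" by (simp add: vm_assoc[symmetric])
  finally show ?thesis using bil by simp
qed

lemma I1: "fm C X \<Longrightarrow> C (x v* E) (y v* E) = 0"
  unfolding E_def using I_gen Zh by blast
lemma I2: "fm C X \<Longrightarrow> C (x v* F) (y v* F) = 0"
  unfolding F_def using I_gen Zg by blast

lemma split_vec: "x v* E + x v* F = x"
  using EF1 by (simp add: vm_add_right[symmetric])

lemma decompL: assumes C: "fm C X" shows "C (x v* E) y = C (x v* E) (y v* F)"
proof -
  have bil: "bilinear_form C" using C by (simp add: fm_def)
  have "C (x v* E) y = C (x v* E) (y v* E + y v* F)" by (simp add: split_vec)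
  also have "\<dots> = C (x v* E) (y v* F)" using bil I1[OF C] by (simp add: bf_addR)
  finally show ?thesis .
qed

lemma decompL2: assumes C: "fm C X" shows "C (x v* F) y = C (x v* F) (y v* E)"
proof -
  have bil: "bilinear_form C" using C by (simp add: fm_def)
  have "C (x v* F) y = C (x v* F) (y v* E + y v* F)" by (simp add: split_vec)
  also have "\<dots> = C (x v* F) (y v* E)" using bil I2[OF C] by (simp add: bf_addR)
  finally show ?thesis .
qed

lemma decompR: assumes C: "fm C X" shows "C x (y v* F) = C (x v* E) (y v* F)"
proof -
  have bil: "bilinear_form C" using C by (simp add: fm_def)
  have "C x (y v* F) = C (x v* E + x v* F) (y v* F)" by (simp add: split_vec)
  also have "\<dots> = C (x v* E) (y v* F)" using bil I2[OF C] by (simp add: bf_addL)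
  finally show ?thesis .
qed

lemma decomp: assumes C: "fm C X" shows "C x y = C (x v* E) (y v* F) + C (x v* F) (y v* E)"
proof -
  have bil: "bilinear_form C" using C by (simp add: fm_def)
  have "C x y = C (x v* E + x v* F) y" by (simp add: split_vec)
  also have "\<dots> = C (x v* E) y + C (x v* F) y" using bil by (simp add: bf_addL)
  also have "\<dots> = C (x v* E) (y v* F) + C (x v* F) (y v* E)"
    using decompL[OF C] decompL2[OF C] by simp
  finally show ?thesis .
qed

lemma shiftX: assumes C: "fm C X" shows "C (x v* X) w = C x (w v* Xi)"
proof -
  have "C (x v* X) w = C (x v* X) ((w v* Xi) v* X)"
    using Xi_facts by (simp add: vm_assoc[symmetric])
  then show ?thesis using C by (simp add: fm_def)
qed

lemma phi2_core:
  "\<exists>k. invertible k \<and> k ** X = X ** k \<and> (\<forall>a b. \<beta> (a v* k) (b v* k) = \<beta>' a b)"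
proof -
  have bil: "bilinear_form \<beta>" and bil': "bilinear_form \<beta>'" using fmb fmb' by (auto simp: fm_def)
  have symb: "\<And>x y. \<beta> x y = \<beta> y x" using fmb by (simp add: fm_def)
  have symb': "\<And>x y. \<beta>' x y = \<beta>' y x" using fmb' by (simp add: fm_def)
  obtain S where S: "\<And>a w. \<beta> (a v* S) w = \<beta>' a w" using rep_matrix[OF bil ndb bil'] by blast
  have SX: "S ** X = X ** S"
  proof (rule mat_eq_rows)
    fix a
    have "\<beta> (a v* (S ** X) - a v* (X ** S)) w = 0" for w
    proof -
      have "\<beta> (a v* (S ** X)) w = \<beta>' a (w v* Xi)" using shiftX[OF fmb, of "a v* S" w] S by (simp add: vm_assoc)
      also have "\<dots> = \<beta>' (a v* X) w" using shiftX[OF fmb', of a w] by simp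
      also have "\<dots> = \<beta> (a v* (X ** S)) w" using S by (simp add: vm_assoc)
      finally show ?thesis using bil by (simp add: bf_diffL)
    qed
    then have "a v* (S ** X) - a v* (X ** S) = 0" using ndb unfolding nondegenerate_def by blast
    then show "a v* (S ** X) = a v* (X ** S)" by simp
  qed
  define k where "k = S ** E + F"
  have EX: "E ** X = X ** E" "F ** X = X ** F" unfolding E_def F_def by (simp_all add: poly_mat_comm)
  have kX: "k ** X = X ** k"
    unfolding k_def by (simp add: matrix_add_rdistrib matrix_add_ldistrib EX matrix_mul_assoc[symmetric])
      (simp add: matrix_mul_assoc SX)
  have ak: "a v* k = (a v* S) v* E + a v* F" for a by (simp add: k_def vm_add_right vm_assoc)
  have SEE: "S ** E ** E = S ** E" by (metis matrix_mul_assoc EE)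
  have akE: "(a v* k) v* E = (a v* S) v* E" for a
    by (simp add: ak vector_matrix_left_distrib vm_assoc[symmetric] SEE FE0)
  have SEF: "S ** E ** F = 0" by (metis matrix_mul_assoc EF0 times0_right)
  have akF: "(a v* k) v* F = a v* F" for a
    by (simp add: ak vector_matrix_left_distrib vm_assoc[symmetric] FF SEF)
  have iso: "\<beta> (a v* k) (b v* k) = \<beta>' a b" for a b
  proof -
    have "\<beta> (a v* k) (b v* k) = \<beta> ((a v* S) v* E) (b v* F) + \<beta> (a v* F) ((b v* S) v* E)"
      using decomp[OF fmb, of "a v* k" "b v* k"] by (simp add: akE akF)
    also have "\<beta> ((a v* S) v* E) (b v* F) = \<beta>' a (b v* F)"
      using decompR[OF fmb, of "a v* S" b] S by simp
    also have "\<beta> (a v* F) ((b v* S) v* E) = \<beta>' (a v* F) b"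
      using decompR[OF fmb, of "b v* S" a] S symb symb' by metis
    also have "\<beta>' a (b v* F) + \<beta>' (a v* F) b = \<beta>' a b"
      using decomp[OF fmb', of a b] decompR[OF fmb', of a b] decompL2[OF fmb', of a b] by simp
    finally show ?thesis .
  qed
  have "invertible k"
  proof (rule inj_invertible)
    fix a assume "a v* k = 0"
    then have "\<forall>b. \<beta>' a b = 0" using iso bil by (metis bf_zeroL)
    then show "a = 0" using ndb' unfolding nondegenerate_def by blast
  qed
  then show ?thesis using kX iso by blast
qed

end




lemma lin_poly_dvd_irr:
  fixes g :: "'a::field poly"
  assumes irr: "irreducible g" and lc: "lead_coeff g = 1" and d: "[:1,1:] dvd g"
  shows "g = [:1,1:]"
proof -
  obtain q where q: "g = [:1,1:] * q" using d by (elim dvdE)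
  have "\<not> is_unit ([:1,1:] :: 'a poly)" using is_unit_iff_degree[of "[:1,1::'a:]"] by simp
  moreover have "is_unit [:1,1::'a:] \<or> is_unit q"
  proof -
    have h: "\<forall>a b. g = a * b \<longrightarrow> a dvd 1 \<or> b dvd 1" using irr unfolding irreducible_def by (elim conjE)
    show ?thesis using h[rule_format, OF q] .
  qed
  ultimately have "is_unit q" by blast
  have q0: "q \<noteq> 0" using q lc by auto
  have "degree q = 0" using is_unit_iff_degree[OF q0] \<open>is_unit q\<close> by simp
  then obtain a where a: "q = [:a:]" by (rule degree_eq_zeroE)
  have "lead_coeff g = a" using q a by simp
  then have "a = 1" using lc by simp
  then show ?thesis using q a by simp
qed

lemma rl_lin: "reflect_poly [:1,1::'a::field:] = [:1,1:]" by (simp add: reflect_poly_def)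
lemma dual_lin: "dual_poly [:1,1::'a::field:] = [:1,1:]"
  by (simp add: dual_poly_def rl_lin)

lemma not_lin_dvd_phi2:
  fixes g :: "'a::field poly"
  assumes irr: "irreducible g" and lc: "lead_coeff g = 1" and c0: "coeff g 0 \<noteq> 0"
    and ne: "g \<noteq> dual_poly g"
  shows "\<not> [:1,1:] dvd g * dual_poly g"
proof
  assume "[:1,1:] dvd g * dual_poly g"
  then have "[:1,1:] dvd g \<or> [:1,1:] dvd dual_poly g"
  proof -
    have pr: "prime_elem [:1,1::'a:]" by (rule prime_elem_linear_field_poly) simp
    show ?thesis by (rule prime_elem_dvd_multD[OF pr]) (fact \<open>[:1,1:] dvd g * dual_poly g\<close>)
  qed
  moreover have "[:1,1:] dvd g" if d2: "[:1,1:] dvd dual_poly g"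
  proof -
    obtain q where q: "dual_poly g = [:1,1:] * q" using d2 by (elim dvdE)
    have r1: "reflect_poly (dual_poly g) = smult (inverse (coeff g 0)) g"
      using c0 by (simp add: dual_poly_def reflect_poly_smult)
    have rl: "reflect_poly [:1,1::'a:] = [:1,1:]" by (rule rl_lin)
    have r2: "reflect_poly (dual_poly g) = [:1,1:] * reflect_poly q"
      by (simp only: q reflect_poly_mult rl)
    have "g = smult (coeff g 0) (smult (inverse (coeff g 0)) g)" using c0 by simp
    also have "\<dots> = smult (coeff g 0) ([:1,1:] * reflect_poly q)" using r1 r2 by simp
    also have "\<dots> = [:1,1:] * smult (coeff g 0) (reflect_poly q)" by (simp only: mult_smult_right)
    finally show ?thesis by (rule dvdI)
  qed
  ultimately have "g = [:1,1:]" using lin_poly_dvd_irr[OF irr lc] by blast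
  then show False using ne dual_lin by metis
qed




lemma polar_bil: "quadratic_form Q \<Longrightarrow> bilinear_form (polar Q)"
  by (simp add: quadratic_form_def)

lemma polar_sym: "polar Q v w = polar Q w v"
  by (simp add: polar_def add.commute)

lemma isomQ_inv: "g \<in> isom_Q Q \<Longrightarrow> invertible g" by (simp add: isom_Q_def)
lemma isomQ_Q: "g \<in> isom_Q Q \<Longrightarrow> Q (v v* g) = Q v" by (simp add: isom_Q_def)

lemma isomQ_B: "g \<in> isom_Q Q \<Longrightarrow> polar Q (v v* g) (w v* g) = polar Q v w"
  by (simp add: polar_def isomQ_Q vector_matrix_left_distrib[symmetric])

lemma fm_polar: "quadratic_form Q \<Longrightarrow> X \<in> isom_Q Q \<Longrightarrow> fm (polar Q) X"
  unfolding fm_def using polar_bil polar_sym isomQ_B by blast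

lemma QF:
  assumes ch2: "(2::'a::field) = 0" and Z: "Z \<in> isom_Q (Q :: 'a^'n::finite \<Rightarrow> 'a)" and ZI: "invertible (Z + mat 1)"
  shows "Q u = polar Q ((u v* matrix_inv (Z + mat 1)) v* Z) (u v* matrix_inv (Z + mat 1))"
proof -
  define w where "w = u v* matrix_inv (Z + mat 1)"
  have "u = w v* (Z + mat 1)"
    unfolding w_def using matrix_inv_both(2)[OF ZI] by (simp add: vm_assoc[symmetric])
  then have u: "u = w v* Z + w" by (simp add: vm_add_right)
  have a: "Q u = polar Q (w v* Z) w + (Q (w v* Z) + Q w)" unfolding u by (simp add: polar_def)
  have b: "Q (w v* Z) + Q w = 0" using isomQ_Q[OF Z] char2_add[OF ch2] by simp
  show ?thesis using a b unfolding w_def by simp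
qed

lemma QL:
  assumes ch2: "(2::'a::field) = 0" and X: "X \<in> isom_Q (Q :: 'a^'n::finite \<Rightarrow> 'a)" and Y: "Y \<in> isom_Q Q"
    and XI: "invertible (X + mat 1)" and YI: "invertible (Y + mat 1)"
    and hB: "\<And>v w. polar Q (v v* h) (w v* h) = polar Q v w" and hY: "h ** Y = X ** h"
  shows "Q (v v* h) = Q v"
proof -
  define P where "P = matrix_inv (X + mat 1)"
  define P' where "P' = matrix_inv (Y + mat 1)"
  have e: "h ** (Y + mat 1) = (X + mat 1) ** h" using hY by (simp add: matrix_add_ldistrib matrix_add_rdistrib)
  have hP: "h ** P' = P ** h"
  proof -
    have "P ** h = P ** h ** ((Y + mat 1) ** P')"
      using matrix_inv_both(1)[OF YI] unfolding P'_def by simp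
    also have "\<dots> = P ** (h ** (Y + mat 1)) ** P'" by (simp add: matrix_mul_assoc)
    also have "\<dots> = (P ** (X + mat 1)) ** h ** P'" by (simp add: e matrix_mul_assoc)
    also have "\<dots> = h ** P'" using matrix_inv_both(2)[OF XI] unfolding P_def by simp
    finally show ?thesis by simp
  qed
  have "Q (v v* h) = polar Q (((v v* h) v* P') v* Y) ((v v* h) v* P')"
    using QF[OF ch2 Y YI] unfolding P'_def by blast
  also have "(v v* h) v* P' = (v v* P) v* h" by (simp add: vm_assoc[symmetric] hP)
  also have "((v v* P) v* h) v* Y = ((v v* P) v* X) v* h" by (simp add: vm_assoc[symmetric] hY matrix_mul_assoc[symmetric])
  also have "polar Q (((v v* P) v* X) v* h) ((v v* P) v* h) = polar Q ((v v* P) v* X) (v v* P)" by (rule hB)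
  also have "\<dots> = Q v" using QF[OF ch2 X XI] unfolding P_def by simp
  finally show ?thesis .
qed




lemma XI_lemma:
  fixes X :: "'a::{finite,field}^'n::finite^'n"
  assumes fX: "poly_mat f X = 0" and nd: "\<not> [:1,1:] dvd f"
  shows "invertible (X + mat 1)"
proof -
  obtain u v where uv: "u * f + v * [:1,1:] = 1"
    using bezout_irr[OF irreducible_linear_field_poly nd] by auto
  have p: "poly_mat [:1,1:] X = X + mat 1"
    using poly_mat_pCons[of 1 "[:1:]" X] by (simp add: add.commute)
  have "poly_mat (u * f + v * [:1,1:]) X = mat 1" using uv by simp
  moreover have "poly_mat (u * f + v * [:1,1:]) X = poly_mat u X ** poly_mat f X + poly_mat v X ** poly_mat [:1,1:] X"
    by (simp only: poly_mat_add poly_mat_mult)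
  ultimately have "poly_mat v X ** (X + mat 1) = mat 1" using fX p by simp
  then show ?thesis by (rule left_inv_invertible)
qed

lemma core_lemma:
  fixes X :: "'a::{finite,field}^'n::finite^'n" and \<beta> :: "'a^'n \<Rightarrow> 'a^'n \<Rightarrow> 'a"
  assumes ch2: "(2::'a) = 0" and minp: "is_min_poly X f" and f: "f \<in> Phi2 \<union> Phi3"
    and fmb: "fm \<beta> X" and ndb: "nondegenerate \<beta>" and fmb': "fm \<beta>' X" and ndb': "nondegenerate \<beta>'"
  shows "\<exists>k. invertible k \<and> k ** X = X ** k \<and> (\<forall>a b. \<beta> (a v* k) (b v* k) = \<beta>' a b)"
  using f
proof
  assume "f \<in> Phi2"
  then obtain g where g: "f = g * dual_poly g" "lead_coeff g = 1" "irreducible g" "coeff g 0 \<noteq> 0"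
    "g \<noteq> dual_poly g" unfolding Phi2_def by blast
  interpret phi2 X g \<beta> \<beta>'
    using g minp fmb ndb fmb' ndb' by unfold_locales auto
  show ?thesis by (rule phi2_core)
next
  assume "f \<in> Phi3"
  then have f3: "irreducible f" "coeff f 0 \<noteq> 0" "degree f > 1" unfolding Phi3_def by auto
  interpret mpf_form X f \<beta>
    using f3 minp fmb ndb ch2 by unfold_locales auto
  show ?thesis by (rule phi3_core[OF f3(3) fmb' ndb'])
qed

lemma not_lin_dvd:
  assumes "f \<in> Phi2 \<union> Phi3" shows "\<not> [:1,1::'a::field:] dvd f"
  using assms
proof
  assume "f \<in> Phi2"
  then obtain g where g: "f = g * dual_poly g" "lead_coeff g = 1" "irreducible g" "coeff g 0 \<noteq> 0"
    "g \<noteq> dual_poly g" unfolding Phi2_def by blast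
  show ?thesis using not_lin_dvd_phi2[OF g(3) g(2) g(4) g(5)] g(1) by simp
next
  assume "f \<in> Phi3"
  then have f3: "irreducible f" "lead_coeff f = 1" "degree f > 1" unfolding Phi3_def by auto
  show ?thesis
  proof
    assume "[:1,1:] dvd f"
    then have "f = [:1,1:]" by (rule lin_poly_dvd_irr[OF f3(1,2)])
    then show False using f3(3) by simp
  qed
qed




theorem proposition6p1p6:
  fixes Q :: "'a::{finite,field}^'n::finite \<Rightarrow> 'a"
    and X :: "'a^'n^'n" and f :: "'a poly" and m :: nat
  assumes "\<exists>k. CARD('a) = 2 ^ k"
    and "CARD('n) = 2 * m"
    and "quadratic_form Q"
    and "nondegenerate (polar Q)"
    and "X \<in> isom_Q Q"
    and "semisimple X"
    and "is_min_poly X f"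
    and "f \<in> Phi"
  shows "(f \<in> Phi1 \<longrightarrow> X = mat 1 \<and> centralizer (isom_Q Q) X = isom_Q Q)
       \<and> (f \<in> Phi2 \<union> Phi3 \<longrightarrow>
            conj_class GLV X \<inter> isom_Q Q = conj_class (isom_Q Q) X
          \<and> centralizer (isom_Q Q) X = centralizer (isom_B (polar Q)) X)"
proof -
  have ch2: "(2::'a) = 0" using char2_of_card assms(1) .
  have qf: "quadratic_form Q" and nd: "nondegenerate (polar Q)" and XQ: "X \<in> isom_Q Q"
    and minp: "is_min_poly X f" using assms by auto
  have bil: "bilinear_form (polar Q)" using polar_bil[OF qf] .
  have fmX: "fm (polar Q) X" using fm_polar[OF qf XQ] .
  have fX: "poly_mat f X = 0" using minp by (simp add: is_min_poly_def)
  show ?thesis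
  proof (intro conjI impI)
    assume "f \<in> Phi1"
    then have f1: "f = [:1,1:]" by (simp add: Phi1_def)
    have "poly_mat [:1,1:] X = X + mat 1"
      using poly_mat_pCons[of 1 "[:1:]" X] by (simp add: add.commute)
    then have "X + mat 1 = 0" using fX f1 by simp
    then have "X = - mat 1" by (simp add: eq_neg_iff_add_eq_0)
    then show X1: "X = mat 1" using char2_mat_neg[OF ch2, of "mat 1 :: 'a^'n^'n"] by (rule trans)
    show "centralizer (isom_Q Q) X = isom_Q Q" unfolding centralizer_def X1 by simp
  next
    assume f23: "f \<in> Phi2 \<union> Phi3"
    have XI: "invertible (X + mat 1)" by (rule XI_lemma[OF fX not_lin_dvd[OF f23]])
    have QB: "isom_Q Q \<subseteq> isom_B (polar Q)"
      unfolding isom_B_def using isomQ_B isomQ_inv by blast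
    show "centralizer (isom_Q Q) X = centralizer (isom_B (polar Q)) X"
    proof
      show "centralizer (isom_Q Q) X \<subseteq> centralizer (isom_B (polar Q)) X"
        using QB unfolding centralizer_def by blast
      show "centralizer (isom_B (polar Q)) X \<subseteq> centralizer (isom_Q Q) X"
      proof
        fix h assume "h \<in> centralizer (isom_B (polar Q)) X"
        then have h: "invertible h" "\<And>v w. polar Q (v v* h) (w v* h) = polar Q v w" "h ** X = X ** h"
          unfolding centralizer_def isom_B_def by auto
        have "Q (v v* h) = Q v" for v by (rule QL[OF ch2 XQ XQ XI XI h(2) h(3)])
        then show "h \<in> centralizer (isom_Q Q) X" using h unfolding centralizer_def isom_Q_def by auto
      qed
    qed
    show "conj_class GLV X \<inter> isom_Q Q = conj_class (isom_Q Q) X"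
    proof
      show "conj_class (isom_Q Q) X \<subseteq> conj_class GLV X \<inter> isom_Q Q"
      proof
        fix Y assume "Y \<in> conj_class (isom_Q Q) X"
        then obtain h where h: "h \<in> isom_Q Q" "Y = matrix_inv h ** X ** h" unfolding conj_class_def by blast
        have hi: "invertible h" using h isomQ_inv by blast
        have hh: "h ** matrix_inv h = mat 1" "matrix_inv h ** h = mat 1" using matrix_inv_both[OF hi] by auto
        have ihi: "invertible (matrix_inv h)" using hh invertible_left_inverse by blast
        have Yi: "invertible Y" using h(2) invertible_mult[OF invertible_mult[OF ihi isomQ_inv[OF XQ]] hi] by simp
        have "Q (v v* Y) = Q v" for v
        proof -
          have "Q (v v* Y) = Q (((v v* matrix_inv h) v* X) v* h)" using h(2) by (simp add: vm_assoc)
          also have "\<dots> = Q (v v* matrix_inv h)" using isomQ_Q[OF h(1)] isomQ_Q[OF XQ] by simp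
          also have "\<dots> = Q ((v v* matrix_inv h) v* h)" using isomQ_Q[OF h(1)] by simp
          also have "\<dots> = Q v" using hh by (simp add: vm_assoc[symmetric])
          finally show ?thesis .
        qed
        then have "Y \<in> isom_Q Q" using Yi unfolding isom_Q_def by blast
        moreover have "Y \<in> conj_class GLV X" using h hi unfolding conj_class_def GLV_def by blast
        ultimately show "Y \<in> conj_class GLV X \<inter> isom_Q Q" by blast
      qed
    next
      show "conj_class GLV X \<inter> isom_Q Q \<subseteq> conj_class (isom_Q Q) X"
      proof
        fix Y assume Y: "Y \<in> conj_class GLV X \<inter> isom_Q Q"
        then obtain g where g: "invertible g" "Y = matrix_inv g ** X ** g" and YQ: "Y \<in> isom_Q Q"
          unfolding conj_class_def GLV_def by blast
        have gg: "g ** matrix_inv g = mat 1" "matrix_inv g ** g = mat 1" using matrix_inv_both[OF g(1)] by auto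
        have gY: "g ** Y = X ** g" using g(2) gg by (simp add: matrix_mul_assoc)
        define \<beta>' where "\<beta>' a b = polar Q (a v* g) (b v* g)" for a b
        have fm': "fm \<beta>' X" unfolding fm_def
        proof (intro conjI allI)
          show "bilinear_form \<beta>'" using bil unfolding bilinear_form_def \<beta>'_def
            by (simp add: vector_matrix_left_distrib vm_scale_left)
          fix v w
          show "\<beta>' v w = \<beta>' w v" unfolding \<beta>'_def by (rule polar_sym)
          have "\<beta>' (v v* X) (w v* X) = polar Q ((v v* g) v* Y) ((w v* g) v* Y)"
            unfolding \<beta>'_def by (simp add: vm_assoc[symmetric] gY)
          also have "\<dots> = \<beta>' v w" unfolding \<beta>'_def by (rule isomQ_B[OF YQ])
          finally show "\<beta>' (v v* X) (w v* X) = \<beta>' v w" .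
        qed
        have nd': "nondegenerate \<beta>'" unfolding nondegenerate_def
        proof (intro allI impI)
          fix a assume a: "\<forall>w. \<beta>' a w = 0"
          have "polar Q (a v* g) w = 0" for w
            using a[rule_format, of "w v* matrix_inv g"] gg unfolding \<beta>'_def by (simp add: vm_assoc[symmetric])
          then have "a v* g = 0" using nd unfolding nondegenerate_def by blast
          then have "(a v* g) v* matrix_inv g = 0" by simp
          then show "a = 0" using gg by (simp add: vm_assoc[symmetric])
        qed
        obtain k where k: "invertible k" "k ** X = X ** k" "\<And>a b. polar Q (a v* k) (b v* k) = \<beta>' a b"
          using core_lemma[OF ch2 minp f23 fmX nd fm' nd'] by blast
        define ki where "ki = matrix_inv k"
        have kk: "k ** ki = mat 1" "ki ** k = mat 1" using matrix_inv_both[OF k(1)] unfolding ki_def by auto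
        have kii: "invertible ki" using kk invertible_left_inverse by blast
        have kiX: "ki ** X = X ** ki"
        proof -
          have "ki ** X = ki ** X ** (k ** ki)" using kk by simp
          also have "\<dots> = ki ** (X ** k) ** ki" by (simp add: matrix_mul_assoc)
          also have "\<dots> = ki ** (k ** X) ** ki" using k(2) by simp
          also have "\<dots> = X ** ki" using kk by (simp add: matrix_mul_assoc)
          finally show ?thesis .
        qed
        define h where "h = ki ** g"
        have hi: "invertible h" unfolding h_def by (rule invertible_mult[OF kii g(1)])
        have hY: "h ** Y = X ** h"
          unfolding h_def by (simp add: matrix_mul_assoc[symmetric] gY) (simp add: matrix_mul_assoc kiX)
        have hB: "polar Q (v v* h) (w v* h) = polar Q v w" for v w
        proof -
          have "polar Q (v v* h) (w v* h) = \<beta>' (v v* ki) (w v* ki)"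
            unfolding h_def \<beta>'_def by (simp add: vm_assoc)
          also have "\<dots> = polar Q ((v v* ki) v* k) ((w v* ki) v* k)" using k(3) by simp
          also have "\<dots> = polar Q v w" using kk by (simp add: vm_assoc[symmetric])
          finally show ?thesis .
        qed
        have YI: "invertible (Y + mat 1)"
        proof -
          have "Y + mat 1 = matrix_inv g ** (X + mat 1) ** g"
            using g(2) gg by (simp add: matrix_add_ldistrib matrix_add_rdistrib)
          moreover have "invertible (matrix_inv g)" using gg invertible_left_inverse by blast
          ultimately show ?thesis using invertible_mult XI g(1) by metis
        qed
        have "Q (v v* h) = Q v" for v by (rule QL[OF ch2 XQ YQ XI YI hB hY])
        then have hQ: "h \<in> isom_Q Q" using hi unfolding isom_Q_def by blast
        have hh: "matrix_inv h ** h = mat 1" using matrix_inv_both[OF hi] by auto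
        have "matrix_inv h ** X ** h = Y"
        proof -
          have "matrix_inv h ** X ** h = matrix_inv h ** (h ** Y)" by (simp add: hY matrix_mul_assoc)
          also have "\<dots> = Y" using hh by (simp add: matrix_mul_assoc)
          finally show ?thesis .
        qed
        then show "Y \<in> conj_class (isom_Q Q) X" using hQ unfolding conj_class_def by blast
      qed
    qed
  qed
qed


end
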